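(* Fix $k\in\mathbb{Z}_{\geq0}$. For integers $0\leq i\leq r\leq k$, in $\mathcal{A}_k$ we have $$s_{(r-i,1^i)}=\underline{V_i^r}+\sum_{j=0}^{i-1}(-1)^j\,\underline{U^r_{i-j-1,wc}}+\underline{U^r_{i-1,\overline{wc},\mathrm{left}}}.$$
   Context: Indices are elements of $\mathbb{Z}/(k+1)\mathbb{Z}$, identified with $[0,k]$. $\mathcal{A}_k$ is the associative $\mathbb{Z}$-algebra with generators $A_0,\dots,A_k$ subject only to $A_iA_{i+1}A_i=A_{i+1}A_iA_{i+1}$ for all $i$ and $A_iA_j=A_jA_i$ whenever $i-j\not\equiv\pm1\pmod{k+1}$. A word $A_{i_1\dots i_m}$ is a sequence of indices with value $A_{i_1}\cdots A_{i_m}$, weak length $m$ and support $\{i_1,\dots,i_m\}$. For a proper subset $A\subsetneq[0,k]$ with $|A|=s$, $d_A=A_{i_1\dots i_s}$ and $i_A=A_{i_s\dots i_1}$, where $(i_1,\dots,i_s)$ is any ordering of $A$ such that whenever $i,i+1\in A$, $i+1$ occurs before $i$ ($d_\emptyset=i_\emptyset=1$). Define $h_s=\sum_{A\in\binom{[0,k]}{s}}d_A$, $e_s=\sum_{A\in\binom{[0,k]}{s}}i_A$, and $s_{(r-i,1^i)}=\sum_{j=0}^i(-1)^jh_{r-i+j}e_{i-j}$. For a proper subset $S$, with $a$ the smallest element of $[0,k]$ not in $S$, $I_S$ is the total order $a+1<\dots<k<0<\dots<a-1$. A word $u=A_{i_1\dots i_m}$ with proper support is a weak hook word of hook type $V$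 (resp. $U$) if with respect to $I_{supp(u)}$, for some $j$, $i_1>\dots>i_j<i_{j+1}<\dots<i_m$ with left side $i_1,\dots,i_j$ and right side $i_j,\dots,i_m$ (resp. $i_1>\dots>i_j=i_{j+1}<\dots<i_m$ with left side $i_1,\dots,i_j$ and right side $i_{j+1},\dots,i_m$). $asc(u)$ is the number of $t$ with $i_t<i_{t+1}$. $u$ is $k$-connected if $supp(u)$ is an interval of $I_{supp(u)}$. Otherwise, among pairs of letters $a<c$ of $u$ with $a\not\equiv c-1\pmod{k+1}$ and no letter $b$ of $u$ with $a<b<c$, let $u_{min}$ be the smallest such $c$; it occurs once or twice (if twice, once on each side). $u$ is $k$-weak connected if it is $k$-connected or $u_{min}$ occurs twice. $X^r_i$ ($X\in\{U,V\}$) is the set of weak hook words of type $X$, length $r$, $asc=i$; $X^r_{i,wc}$ its subset of $k$-weak connected words; $X^r_{i,\overline{wc},\mathrm{left}}$ its subset of words not $k$-weak connected whose single occurrence of $u_{min}$ lies on the left side. For a finite set $S$ of words, $\underline{S}=\sum_{u\in S}u\in\mathcal{A}_k$. *)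

theory Defs
  imports Main
begin

text \<open>Elements of the free associative Z-algebra on letters (indices) are represented
  as functions from words (nat lists) to their integer coefficients (finitely supported
  for all elements we construct). Equality in A_k is equality modulo the two-sided ideal
  generated by the defining relations.\<close>

type_synonym felem = "nat list \<Rightarrow> int"

definition wd :: "nat list \<Rightarrow> felem" where
  "wd u = (\<lambda>w. if w = u then 1 else 0)"

definition fmul :: "felem \<Rightarrow> felem \<Rightarrow> felem" where
  "fmul p q = (\<lambda>w. \<Sum>n\<le>length w. p (take n w) * q (drop n w))"

text \<open>underline S: sum of the words in S\<close>
definition Ind :: "nat list set \<Rightarrow> felem" where
  "Ind S = (\<lambda>w. if w \<in> S then 1 else 0)"

definition cadj :: "nat \<Rightarrow> nat \<Rightarrow> nat \<Rightarrow> bool" where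
  "cadj k i j \<longleftrightarrow> j = (i + 1) mod (k + 1) \<or> i = (j + 1) mod (k + 1)"

definition rels :: "nat \<Rightarrow> (nat list \<times> nat list) set" where
  "rels k = {([i, (i+1) mod (k+1), i], [(i+1) mod (k+1), i, (i+1) mod (k+1)]) | i. i \<le> k}
          \<union> {([i, j], [j, i]) | i j. i \<le> k \<and> j \<le> k \<and> \<not> cadj k i j}"

inductive_set relideal :: "nat \<Rightarrow> felem set" for k where
  zero: "(\<lambda>_. 0) \<in> relideal k"
| add: "p \<in> relideal k \<Longrightarrow> q \<in> relideal k \<Longrightarrow> (\<lambda>w. p w + q w) \<in> relideal k"
| neg: "p \<in> relideal k \<Longrightarrow> (\<lambda>w. - p w) \<in> relideal k"
| gen: "(l, r) \<in> rels k \<Longrightarrow> set u \<subseteq> {0..k} \<Longrightarrow> set v \<subseteq> {0..k} \<Longrightarrow>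
        (\<lambda>w. wd (u @ l @ v) w - wd (u @ r @ v) w) \<in> relideal k"

definition Aeq :: "nat \<Rightarrow> felem \<Rightarrow> felem \<Rightarrow> bool" where
  "Aeq k p q \<longleftrightarrow> (\<lambda>w. p w - q w) \<in> relideal k"

text \<open>d_A for a proper subset A of [0,k]: some ordering where i+1 comes before i
  whenever both i and i+1 (mod k+1) lie in A (any such choice gives the same element of A_k).\<close>
definition dword :: "nat \<Rightarrow> nat set \<Rightarrow> nat list" where
  "dword k A = (SOME xs. distinct xs \<and> set xs = A \<and>
     (\<forall>p q. p < length xs \<and> q < length xs \<and> q \<noteq> p \<and> xs ! q = (xs ! p + 1) mod (k + 1)
        \<longrightarrow> q < p))"

definition iword :: "nat \<Rightarrow> nat set \<Rightarrow> nat list" where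
  "iword k A = rev (dword k A)"

definition hh :: "nat \<Rightarrow> nat \<Rightarrow> felem" where
  "hh k s = (\<lambda>w. \<Sum>A\<in>{A. A \<subseteq> {0..k} \<and> card A = s}. wd (dword k A) w)"

definition ee :: "nat \<Rightarrow> nat \<Rightarrow> felem" where
  "ee k s = (\<lambda>w. \<Sum>A\<in>{A. A \<subseteq> {0..k} \<and> card A = s}. wd (iword k A) w)"

definition shook :: "nat \<Rightarrow> nat \<Rightarrow> nat \<Rightarrow> felem" where
  "shook k r i = (\<lambda>w. \<Sum>j\<le>i. (-1) ^ j * fmul (hh k (r - i + j)) (ee k (i - j)) w)"

text \<open>Rank of x in the total order I_S: a+1 < ... < k < 0 < ... < a-1, with a = min of
  complement of S; a itself gets rank k.\<close>
definition rk :: "nat \<Rightarrow> nat set \<Rightarrow> nat \<Rightarrow> nat" where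
  "rk k S x = (x + k - (LEAST a. a \<le> k \<and> a \<notin> S)) mod (k + 1)"

definition properword :: "nat \<Rightarrow> nat list \<Rightarrow> bool" where
  "properword k u \<longleftrightarrow> set u \<subseteq> {0..k} \<and> set u \<noteq> {0..k}"

definition decr :: "nat \<Rightarrow> nat set \<Rightarrow> nat list \<Rightarrow> bool" where
  "decr k S xs \<longleftrightarrow> sorted_wrt (\<lambda>x y. rk k S y < rk k S x) xs"

definition incr :: "nat \<Rightarrow> nat set \<Rightarrow> nat list \<Rightarrow> bool" where
  "incr k S xs \<longleftrightarrow> sorted_wrt (\<lambda>x y. rk k S x < rk k S y) xs"

text \<open>0-indexed valley position p: left side = take (Suc p) u\<close>
definition Vshape :: "nat \<Rightarrow> nat list \<Rightarrow> nat \<Rightarrow> bool" where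
  "Vshape k u p \<longleftrightarrow> decr k (set u) (take (Suc p) u) \<and> incr k (set u) (drop p u)"

definition Ushape :: "nat \<Rightarrow> nat list \<Rightarrow> nat \<Rightarrow> bool" where
  "Ushape k u p \<longleftrightarrow> Suc p < length u \<and> u ! p = u ! Suc p \<and>
     decr k (set u) (take (Suc p) u) \<and> incr k (set u) (drop (Suc p) u)"

definition isV :: "nat \<Rightarrow> nat list \<Rightarrow> bool" where
  "isV k u \<longleftrightarrow> properword k u \<and> (\<exists>p. Vshape k u p)"

definition isU :: "nat \<Rightarrow> nat list \<Rightarrow> bool" where
  "isU k u \<longleftrightarrow> properword k u \<and> (\<exists>p. Ushape k u p)"

definition asc :: "nat \<Rightarrow> nat list \<Rightarrow> nat" where
  "asc k u = card {t. Suc t < length u \<and> rk k (set u) (u ! t) < rk k (set u) (u ! Suc t)}"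

definition kconn :: "nat \<Rightarrow> nat list \<Rightarrow> bool" where
  "kconn k u \<longleftrightarrow> (\<forall>x\<in>set u. \<forall>z\<in>set u. \<forall>y\<le>k.
      rk k (set u) x \<le> rk k (set u) y \<and> rk k (set u) y \<le> rk k (set u) z \<longrightarrow> y \<in> set u)"

definition gapletter :: "nat \<Rightarrow> nat list \<Rightarrow> nat \<Rightarrow> bool" where
  "gapletter k u c \<longleftrightarrow> c \<in> set u \<and> (\<exists>a\<in>set u. rk k (set u) a < rk k (set u) c \<and>
      c \<noteq> (a + 1) mod (k + 1) \<and>
      \<not> (\<exists>b\<in>set u. rk k (set u) a < rk k (set u) b \<and> rk k (set u) b < rk k (set u) c))"

definition umin :: "nat \<Rightarrow> nat list \<Rightarrow> nat \<Rightarrow> bool" where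
  "umin k u c \<longleftrightarrow> gapletter k u c \<and> (\<forall>c'. gapletter k u c' \<longrightarrow> rk k (set u) c \<le> rk k (set u) c')"

definition wconn :: "nat \<Rightarrow> nat list \<Rightarrow> bool" where
  "wconn k u \<longleftrightarrow> kconn k u \<or> (\<exists>c. umin k u c \<and> count_list u c = 2)"

definition Vset :: "nat \<Rightarrow> nat \<Rightarrow> int \<Rightarrow> nat list set" where
  "Vset k r i = {u. isV k u \<and> length u = r \<and> int (asc k u) = i}"

definition Uset :: "nat \<Rightarrow> nat \<Rightarrow> int \<Rightarrow> nat list set" where
  "Uset k r i = {u. isU k u \<and> length u = r \<and> int (asc k u) = i}"

definition Uwc :: "nat \<Rightarrow> nat \<Rightarrow> int \<Rightarrow> nat list set" where
  "Uwc k r i = {u \<in> Uset k r i. wconn k u}"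

definition Unwcleft :: "nat \<Rightarrow> nat \<Rightarrow> int \<Rightarrow> nat list set" where
  "Unwcleft k r i = {u \<in> Uset k r i. \<not> wconn k u \<and>
     (\<exists>c. umin k u c \<and> count_list u c = 1 \<and> (\<exists>p. Ushape k u p \<and> c \<in> set (take (Suc p) u)))}"

end

theory Submission
  imports Defs
begin


lemma cadj_sym: "cadj k i j = cadj k j i" unfolding cadj_def by auto

definition stp :: "nat \<Rightarrow> nat list \<Rightarrow> nat list \<Rightarrow> bool" where
 "stp k x y \<longleftrightarrow> (\<exists>u v l r. ((l,r) \<in> rels k \<or> (r,l) \<in> rels k) \<and> set u \<subseteq> {0..k} \<and> set v \<subseteq> {0..k}
      \<and> x = u@l@v \<and> y = u@r@v)"

abbreviation conv where "conv k \<equiv> (stp k)\<^sup>*\<^sup>*"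

lemma Aeq_refl: "Aeq k p p"
  unfolding Aeq_def using relideal.zero[of k] by simp

lemma Aeq_trans: assumes "Aeq k p q" "Aeq k q s" shows "Aeq k p s"
proof -
  have "(\<lambda>w. (p w - q w) + (q w - s w)) \<in> relideal k"
    using assms unfolding Aeq_def by (rule relideal.add)
  moreover have "(\<lambda>w. (p w - q w) + (q w - s w)) = (\<lambda>w. p w - s w)" by auto
  ultimately show ?thesis unfolding Aeq_def by simp
qed

lemma Aeq_sym: assumes "Aeq k p q" shows "Aeq k q p"
proof -
  have "(\<lambda>w. - (p w - q w)) \<in> relideal k"
    using assms unfolding Aeq_def by (rule relideal.neg)
  moreover have "(\<lambda>w. - (p w - q w)) = (\<lambda>w. q w - p w)" by auto
  ultimately show ?thesis unfolding Aeq_def by simp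
qed

lemma Aeq_add: assumes "Aeq k p q" "Aeq k p' q'"
  shows "Aeq k (\<lambda>w. p w + p' w) (\<lambda>w. q w + q' w)"
proof -
  have "(\<lambda>w. (p w - q w) + (p' w - q' w)) \<in> relideal k"
    using assms unfolding Aeq_def by (rule relideal.add)
  moreover have "(\<lambda>w. (p w - q w) + (p' w - q' w)) = (\<lambda>w. (p w + p' w) - (q w + q' w))" by auto
  ultimately show ?thesis unfolding Aeq_def by simp
qed

lemma relideal_nmult: "p \<in> relideal k \<Longrightarrow> (\<lambda>w. int n * p w) \<in> relideal k"
proof (induction n)
  case 0 then show ?case using relideal.zero[of k] by simp
next
  case (Suc n)
  have "(\<lambda>w. int n * p w + p w) \<in> relideal k" using relideal.add[OF Suc.IH[OF Suc.prems] Suc.prems] .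
  moreover have "(\<lambda>w. int n * p w + p w) = (\<lambda>w. int (Suc n) * p w)" by (auto simp: algebra_simps)
  ultimately show ?case by simp
qed

lemma relideal_smult: assumes "p \<in> relideal k" shows "(\<lambda>w. c * p w) \<in> relideal k"
proof (cases "c \<ge> 0")
  case True
  then obtain n where "c = int n" by (metis nonneg_eq_int)
  then show ?thesis using relideal_nmult[OF assms] by simp
next
  case False
  then obtain n where n: "c = - int n" by (metis le_cases neg_0_le_iff_le nonneg_eq_int add.inverse_inverse)
  have "(\<lambda>w. - (int n * p w)) \<in> relideal k" using relideal.neg[OF relideal_nmult[OF assms]] .
  then show ?thesis using n by simp
qed

lemma Aeq_smult: assumes "Aeq k p q" shows "Aeq k (\<lambda>w. c * p w) (\<lambda>w. c * q w)"
proof -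
  have "(\<lambda>w. c * (p w - q w)) \<in> relideal k" using relideal_smult assms unfolding Aeq_def by blast
  moreover have "(\<lambda>w. c * (p w - q w)) = (\<lambda>w. c * p w - c * q w)" by (auto simp: algebra_simps)
  ultimately show ?thesis unfolding Aeq_def by simp
qed

lemma Aeq_sum: assumes "finite I" "\<And>x. x \<in> I \<Longrightarrow> Aeq k (F x) (G x)"
  shows "Aeq k (\<lambda>w. \<Sum>x\<in>I. F x w) (\<lambda>w. \<Sum>x\<in>I. G x w)"
  using assms
proof (induction I rule: finite_induct)
  case empty then show ?case by (simp add: Aeq_refl)
next
  case (insert x I)
  have "Aeq k (\<lambda>w. F x w + (\<Sum>x\<in>I. F x w)) (\<lambda>w. G x w + (\<Sum>x\<in>I. G x w))"
    using insert by (intro Aeq_add) auto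
  then show ?case using insert by simp
qed

lemma stp_Aeq: assumes "stp k x y" shows "Aeq k (wd x) (wd y)"
proof -
  obtain u v l r where h: "(l,r) \<in> rels k \<or> (r,l) \<in> rels k" "set u \<subseteq> {0..k}" "set v \<subseteq> {0..k}"
    "x = u@l@v" "y = u@r@v" using assms unfolding stp_def by blast
  show ?thesis
  proof (cases "(l,r) \<in> rels k")
    case True
    then show ?thesis using relideal.gen[OF True h(2,3)] h unfolding Aeq_def by simp
  next
    case False
    then have "(r,l) \<in> rels k" using h by blast
    from relideal.gen[OF this h(2,3)] have "Aeq k (wd y) (wd x)" using h unfolding Aeq_def by simp
    then show ?thesis by (rule Aeq_sym)
  qed
qed

lemma conv_Aeq: "conv k x y \<Longrightarrow> Aeq k (wd x) (wd y)"
proof (induction rule: rtranclp_induct)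
  case base then show ?case by (rule Aeq_refl)
next
  case (step y z) then show ?case using stp_Aeq Aeq_trans by blast
qed

lemma stp_sym: "stp k x y \<Longrightarrow> stp k y x"
  unfolding stp_def by blast

lemma conv_sym: "conv k x y \<Longrightarrow> conv k y x"
proof (induction rule: rtranclp_induct)
  case base then show ?case by simp
next
  case (step y z) then show ?case using stp_sym
    by (metis converse_rtranclp_into_rtranclp)
qed

lemma stp_app: assumes "stp k x y" "set p \<subseteq> {0..k}" "set q \<subseteq> {0..k}"
  shows "stp k (p@x@q) (p@y@q)"
proof -
  obtain u v l r where h: "(l,r) \<in> rels k \<or> (r,l) \<in> rels k" "set u \<subseteq> {0..k}" "set v \<subseteq> {0..k}"
    "x = u@l@v" "y = u@r@v" using assms unfolding stp_def by blast
  show ?thesis unfolding stp_def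
    by (rule exI[of _ "p@u"], rule exI[of _ "v@q"], rule exI[of _ l], rule exI[of _ r]) (use h assms in auto)
qed

lemma conv_app: assumes "conv k x y" "set p \<subseteq> {0..k}" "set q \<subseteq> {0..k}"
  shows "conv k (p@x@q) (p@y@q)"
  using assms(1)
proof (induction rule: rtranclp_induct)
  case base then show ?case by simp
next
  case (step y z) then show ?case using stp_app[OF _ assms(2,3)]
    by (metis rtranclp.rtrancl_into_rtrancl)
qed

lemma rels_rev: assumes "(l,r) \<in> rels k" shows "(rev l, rev r) \<in> rels k \<or> (rev r, rev l) \<in> rels k"
  using assms unfolding rels_def by (auto simp: cadj_sym)

lemma stp_rev: assumes "stp k x y" shows "stp k (rev x) (rev y)"
proof -
  obtain u v l r where h: "(l,r) \<in> rels k \<or> (r,l) \<in> rels k" "set u \<subseteq> {0..k}" "set v \<subseteq> {0..k}"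
    "x = u@l@v" "y = u@r@v" using assms unfolding stp_def by blast
  have "(rev l, rev r) \<in> rels k \<or> (rev r, rev l) \<in> rels k" using h(1) rels_rev by blast
  then show ?thesis unfolding stp_def
    by (rule_tac exI[of _ "rev v"], rule_tac exI[of _ "rev u"], rule_tac exI[of _ "rev l"],
        rule_tac exI[of _ "rev r"]) (use h in auto)
qed

lemma conv_rev: "conv k x y \<Longrightarrow> conv k (rev x) (rev y)"
proof (induction rule: rtranclp_induct)
  case base then show ?case by simp
next
  case (step y z) then show ?case using stp_rev
    by (metis rtranclp.rtrancl_into_rtrancl)
qed

lemma conv_commute: assumes "\<forall>x\<in>set M. x \<le> k \<and> \<not> cadj k x c" "c \<le> k"
  shows "conv k (M @ [c]) (c # M)"
  using assms(1)
proof (induction M)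
  case Nil then show ?case by simp
next
  case (Cons x M)
  have ih: "conv k (M@[c]) (c#M)" using Cons by auto
  have 1: "conv k ([x] @ (M @ [c]) @ []) ([x] @ (c # M) @ [])"
    using conv_app[OF ih, of "[x]" "[]"] Cons.prems by auto
  have "([x,c],[c,x]) \<in> rels k" using Cons.prems assms(2) unfolding rels_def by auto
  then have "stp k ([] @ [x,c] @ M) ([] @ [c,x] @ M)" unfolding stp_def using Cons.prems assms(2)
    by (intro exI[of _ "[]"] exI[of _ M] exI[of _ "[x,c]"] exI[of _ "[c,x]"]) auto
  then show ?case using 1 by (simp add: rtranclp.rtrancl_into_rtrancl)
qed



definition amin :: "nat \<Rightarrow> nat set \<Rightarrow> nat" where
  "amin k S = (LEAST a. a \<le> k \<and> a \<notin> S)"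

definition gd :: "nat \<Rightarrow> nat set \<Rightarrow> bool" where
  "gd k S \<longleftrightarrow> S \<subseteq> {0..k} \<and> (\<exists>a\<le>k. a \<notin> S)"

lemma rk_amin: "rk k S x = (x + k - amin k S) mod (k + 1)"
  unfolding rk_def amin_def by simp

lemma amin_props: assumes "gd k S" shows "amin k S \<le> k" "amin k S \<notin> S"
proof -
  from assms obtain a where "a \<le> k \<and> a \<notin> S" unfolding gd_def by blast
  then have "amin k S \<le> k \<and> amin k S \<notin> S" unfolding amin_def by (rule LeastI)
  then show "amin k S \<le> k" "amin k S \<notin> S" by auto
qed

lemma rk_formula: assumes "amin k S \<le> k" "x \<le> k" "x \<noteq> amin k S"
  shows "rk k S x = (if amin k S < x then x - amin k S - 1 else x + k - amin k S)"
proof (cases "amin k S < x")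
  case True
  have eq: "x + k - amin k S = (x - amin k S - 1) + (k + 1)" using True assms by simp
  have "rk k S x = (x - amin k S - 1 + (k+1)) mod (k+1)" unfolding rk_amin by (simp only: eq)
  also have "\<dots> = (x - amin k S - 1) mod (k+1)" by (rule mod_add_self2)
  also have "\<dots> = x - amin k S - 1" using assms by simp
  finally show ?thesis using True by simp
next
  case False
  then show ?thesis using assms unfolding rk_amin by simp
qed

lemma rk_amin_val: assumes "amin k S \<le> k" shows "rk k S (amin k S) = k"
  using assms unfolding rk_amin by simp

lemma rk_inj: assumes "gd k S" "x \<le> k" "y \<le> k" "rk k S x = rk k S y" shows "x = y"
proof -
  have a: "amin k S \<le> k" using amin_props[OF assms(1)] by simp
  have lt: "z \<le> k \<Longrightarrow> z \<noteq> amin k S \<Longrightarrow> rk k S z < k" for z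
    using rk_formula[OF a, of z] a by auto
  show ?thesis
  proof (cases "x = amin k S \<or> y = amin k S")
    case True
    then show ?thesis using assms lt rk_amin_val[OF a] by (metis less_irrefl)
  next
    case False
    then show ?thesis using assms a rk_formula[OF a, of x] rk_formula[OF a, of y]
      by (auto split: if_splits)
  qed
qed

lemma rk_inj_on: "gd k S \<Longrightarrow> inj_on (rk k S) {0..k}"
  using rk_inj unfolding inj_on_def by auto

lemma rk_succ: assumes "gd k S" "x \<in> S" "(x + 1) mod (k + 1) \<in> S"
  shows "rk k S ((x + 1) mod (k + 1)) = rk k S x + 1"
proof -
  have a: "amin k S \<le> k" "amin k S \<notin> S" using amin_props[OF assms(1)] by auto
  have xk: "x \<le> k" using assms unfolding gd_def by auto
  have xa: "x \<noteq> amin k S" using a assms by auto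
  have ya: "(x + 1) mod (k + 1) \<noteq> amin k S" using a assms by metis
  show ?thesis
  proof (cases "x = k")
    case True
    then have y0: "(x + 1) mod (k + 1) = 0" by simp
    then show ?thesis using rk_formula[OF a(1) xk xa] rk_formula[OF a(1), of 0] ya True xa a(1)
      by auto
  next
    case False
    then have y: "(x + 1) mod (k + 1) = x + 1" using xk by simp
    show ?thesis using rk_formula[OF a(1) xk xa] rk_formula[OF a(1), of "x+1"] ya xk False xa a(1)
      unfolding y by auto
  qed
qed

lemma decr_distinct: "decr k S xs \<Longrightarrow> distinct xs"
  unfolding decr_def by (induction xs) auto

lemma incr_distinct: "incr k S xs \<Longrightarrow> distinct xs"
  unfolding incr_def by (induction xs) auto

lemma decr_rev: "decr k S (rev xs) = incr k S xs"
  unfolding decr_def incr_def by (simp add: sorted_wrt_rev)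

lemma incr_rev: "incr k S (rev xs) = decr k S xs"
  unfolding decr_def incr_def by (simp add: sorted_wrt_rev)

lemma decr_unique: "decr k S xs \<Longrightarrow> decr k S ys \<Longrightarrow> set xs = set ys \<Longrightarrow> xs = ys"
proof (induction xs arbitrary: ys)
  case Nil then show ?case by simp
next
  case (Cons x xs)
  then obtain y ys' where ys: "ys = y # ys'" by (cases ys) auto
  have dx: "\<forall>z\<in>set xs. rk k S z < rk k S x" "decr k S xs" using Cons.prems unfolding decr_def by auto
  have dy: "\<forall>z\<in>set ys'. rk k S z < rk k S y" "decr k S ys'" using Cons.prems ys unfolding decr_def by auto
  have "x = y"
  proof (rule ccontr)
    assume "x \<noteq> y"
    then have "x \<in> set ys'" "y \<in> set xs" using Cons.prems ys by auto
    then show False using dx dy by fastforce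
  qed
  moreover have "set xs = set ys'"
    using Cons.prems ys \<open>x = y\<close> decr_distinct[OF Cons.prems(1)] decr_distinct[OF Cons.prems(2)]
    by (metis distinct.simps(2) list.set(2) Diff_insert_absorb)
  ultimately show ?case using Cons.IH[OF dx(2) dy(2)] ys by simp
qed

lemma incr_unique: "incr k S xs \<Longrightarrow> incr k S ys \<Longrightarrow> set xs = set ys \<Longrightarrow> xs = ys"
  using decr_unique[of k S "rev xs" "rev ys"] by (simp add: decr_rev)

lemma decr_exists: assumes "gd k S" "A \<subseteq> S" shows "\<exists>xs. set xs = A \<and> decr k S xs"
proof -
  have fin: "finite A" using assms unfolding gd_def by (meson finite_atLeastAtMost finite_subset)
  define zs where "zs = sort_key (rk k S) (sorted_list_of_set A)"
  have sz: "set zs = A" unfolding zs_def using fin by simp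
  have dz: "distinct zs" unfolding zs_def using fin by simp
  have so: "sorted (map (rk k S) zs)" unfolding zs_def by simp
  have "inj_on (rk k S) (set zs)" using rk_inj_on[OF assms(1)] sz assms unfolding gd_def
    by (meson inj_on_subset order_trans)
  then have "distinct (map (rk k S) zs)" using dz by (simp add: distinct_map)
  then have "sorted_wrt (<) (map (rk k S) zs)" using so by (simp add: strict_sorted_iff)
  then have "incr k S zs" unfolding incr_def by (simp add: sorted_wrt_map)
  then show ?thesis using sz by (metis decr_rev set_rev)
qed

definition decl :: "nat \<Rightarrow> nat set \<Rightarrow> nat set \<Rightarrow> nat list" where
  "decl k S A = (SOME xs. set xs = A \<and> decr k S xs)"

definition incl :: "nat \<Rightarrow> nat set \<Rightarrow> nat set \<Rightarrow> nat list" where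
  "incl k S A = rev (decl k S A)"

lemma decl_props: assumes "gd k S" "A \<subseteq> S" shows "set (decl k S A) = A" "decr k S (decl k S A)"
proof -
  have "set (decl k S A) = A \<and> decr k S (decl k S A)"
    unfolding decl_def using someI_ex[OF decr_exists[OF assms]] .
  then show "set (decl k S A) = A" "decr k S (decl k S A)" by auto
qed

lemma incl_props: assumes "gd k S" "A \<subseteq> S" shows "set (incl k S A) = A" "incr k S (incl k S A)"
  using decl_props[OF assms] unfolding incl_def by (auto simp: incr_rev)

lemma decl_eq: assumes "gd k S" "decr k S xs" "set xs \<subseteq> S" shows "decl k S (set xs) = xs"
  using decl_props[OF assms(1,3)] decr_unique assms(2) by blast

lemma incl_eq: assumes "gd k S" "incr k S xs" "set xs \<subseteq> S" shows "incl k S (set xs) = xs"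
  using decl_eq[OF assms(1), of "rev xs"] assms unfolding incl_def by (simp add: decr_rev)

fun okd :: "nat \<Rightarrow> nat list \<Rightarrow> bool" where
  "okd k [] = True"
| "okd k (x # xs) = ((x + 1) mod (k + 1) \<notin> set xs \<and> okd k xs)"

lemma okd_remove: "okd k (p @ y # q) \<Longrightarrow> okd k (p @ q)"
  by (induction p) auto

lemma okd_app: "okd k (p @ q) \<Longrightarrow> x \<in> set p \<Longrightarrow> (x + 1) mod (k + 1) \<notin> set q"
  by (induction p) auto

lemma swap_conv: "distinct xs \<Longrightarrow> distinct ys \<Longrightarrow> set xs = set ys \<Longrightarrow> set ys \<subseteq> {0..k}
   \<Longrightarrow> okd k xs \<Longrightarrow> okd k ys \<Longrightarrow> conv k xs ys"
proof (induction ys arbitrary: xs)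
  case Nil then show ?case by simp
next
  case (Cons y ys xs)
  have "y \<in> set xs" using Cons.prems(3) by simp
  then obtain p q where xs: "xs = p @ y # q" by (meson split_list)
  have nc: "\<forall>x\<in>set p. x \<le> k \<and> \<not> cadj k x y"
  proof
    fix x assume x: "x \<in> set p"
    have "x \<noteq> y" using Cons.prems(1) xs x by auto
    moreover have "x \<in> set xs" using xs x by simp
    ultimately have xys: "x \<in> set ys" using Cons.prems(3) by simp
    have o6: "(y + 1) mod (k + 1) \<notin> set ys" using Cons.prems(6) by simp
    have 1: "(y + 1) mod (k + 1) \<noteq> x" using o6 xys by blast
    have o5: "okd k (p @ y # q)" using Cons.prems(5) xs by simp
    have "(x + 1) mod (k + 1) \<notin> set (y#q)" using okd_app[OF o5 x] .
    then have 2: "(x + 1) mod (k + 1) \<noteq> y" by simp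
    have "x \<le> k" using xys Cons.prems(4) by auto
    moreover have "\<not> cadj k x y" unfolding cadj_def
    proof
      assume "y = (x + 1) mod (k + 1) \<or> x = (y + 1) mod (k + 1)"
      then show False using 1 2 by (elim disjE) (simp_all only: not_True_eq_False)
    qed
    ultimately show "x \<le> k \<and> \<not> cadj k x y" by blast
  qed
  have yk: "y \<le> k" using Cons.prems(4) by simp
  have qk: "set q \<subseteq> {0..k}" using Cons.prems(3,4) xs by auto
  have c1: "conv k ([] @ (p @ [y]) @ q) ([] @ (y # p) @ q)"
    using conv_app[OF conv_commute[OF nc yk], of "[]" q] qk by simp
  have ih2: "conv k (p @ q) ys"
  proof (rule Cons.IH)
    show "distinct (p @ q)" using Cons.prems(1) xs by simp
    show "distinct ys" using Cons.prems by auto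
    have "y \<notin> set ys" using Cons.prems(2) by simp
    moreover have "y \<notin> set p" "y \<notin> set q" using Cons.prems(1) xs by auto
    moreover have "insert y (set (p @ q)) = insert y (set ys)" using Cons.prems(3) xs by simp
    ultimately show "set (p @ q) = set ys" by (metis Diff_insert_absorb Un_iff set_append)
    show "set ys \<subseteq> {0..k}" using Cons.prems(4) by simp
    show "okd k (p @ q)" using okd_remove Cons.prems(5) xs by blast
    show "okd k ys" using Cons.prems(6) by simp
  qed
  have c2: "conv k ([y] @ (p @ q) @ []) ([y] @ ys @ [])" using conv_app[OF ih2, of "[y]" "[]"] yk by simp
  show ?case using c1 c2 xs by (simp add: rtranclp_trans)
qed

lemma decr_okd: assumes "gd k S" "decr k S xs" "set xs \<subseteq> S" shows "okd k xs"
  using assms(2,3)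
proof (induction xs)
  case Nil then show ?case by simp
next
  case (Cons x xs)
  have d: "\<forall>z\<in>set xs. rk k S z < rk k S x" "decr k S xs" using Cons.prems unfolding decr_def by auto
  have "(x + 1) mod (k + 1) \<notin> set xs"
  proof
    assume h: "(x + 1) mod (k + 1) \<in> set xs"
    then have "rk k S ((x + 1) mod (k + 1)) = rk k S x + 1" using rk_succ[OF assms(1)] Cons.prems by auto
    then show False using d h by fastforce
  qed
  then show ?case using Cons d by auto
qed

lemma okd_index: "(\<forall>p q. p < length xs \<and> q < length xs \<and> q \<noteq> p \<and> xs ! q = (xs ! p + 1) mod (k + 1) \<longrightarrow> q < p)
  \<Longrightarrow> okd k xs"
proof (induction xs)
  case Nil then show ?case by simp
next
  case (Cons x xs)
  have 1: "(x + 1) mod (k + 1) \<notin> set xs"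
  proof
    assume "(x + 1) mod (k + 1) \<in> set xs"
    then obtain j where "j < length xs" "xs ! j = (x + 1) mod (k + 1)" by (meson in_set_conv_nth)
    then show False using Cons.prems[rule_format, of 0 "Suc j"] by auto
  qed
  have "okd k xs"
  proof (rule Cons.IH, intro allI impI)
    fix p q assume "p < length xs \<and> q < length xs \<and> q \<noteq> p \<and> xs ! q = (xs ! p + 1) mod (k + 1)"
    then show "q < p" using Cons.prems[rule_format, of "Suc p" "Suc q"] by auto
  qed
  then show ?case using 1 by simp
qed

lemma decr_index: assumes "gd k S" "decr k S xs" "set xs \<subseteq> S"
  shows "\<forall>p q. p < length xs \<and> q < length xs \<and> q \<noteq> p \<and> xs ! q = (xs ! p + 1) mod (k + 1) \<longrightarrow> q < p"
proof (intro allI impI)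
  fix p q assume h: "p < length xs \<and> q < length xs \<and> q \<noteq> p \<and> xs ! q = (xs ! p + 1) mod (k + 1)"
  have "rk k S (xs ! q) = rk k S (xs ! p) + 1"
    using rk_succ[OF assms(1), of "xs ! p"] h assms(3) by (metis nth_mem subsetD)
  moreover have "p < q \<Longrightarrow> rk k S (xs ! q) < rk k S (xs ! p)"
    using sorted_wrt_nth_less[OF assms(2)[unfolded decr_def], of p q] h by blast
  ultimately show "q < p" using h by fastforce
qed

lemma gd_sub: "gd k S \<Longrightarrow> A \<subseteq> S \<Longrightarrow> gd k A"
  unfolding gd_def by blast

lemma dword_props: assumes "gd k A"
  shows "distinct (dword k A)" "set (dword k A) = A" "okd k (dword k A)"
proof -
  let ?P = "\<lambda>xs. distinct xs \<and> set xs = A \<and>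
     (\<forall>p q. p < length xs \<and> q < length xs \<and> q \<noteq> p \<and> xs ! q = (xs ! p + 1) mod (k + 1)
        \<longrightarrow> q < p)"
  have d1: "set (decl k A A) = A" "decr k A (decl k A A)" using decl_props[OF assms, of A] by auto
  have "?P (decl k A A)"
  proof (intro conjI)
    show "distinct (decl k A A)" using decr_distinct d1 by blast
    show "set (decl k A A) = A" using d1 by blast
    show "\<forall>p q. p < length (decl k A A) \<and> q < length (decl k A A) \<and> q \<noteq> p \<and> decl k A A ! q = (decl k A A ! p + 1) mod (k + 1) \<longrightarrow> q < p"
      using decr_index[OF assms d1(2)] d1(1) by blast
  qed
  then have "?P (dword k A)" unfolding dword_def by (rule someI)
  then show "distinct (dword k A)" "set (dword k A) = A" "okd k (dword k A)"
    using okd_index by blast+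
qed

lemma dword_conv: assumes "gd k S" "A \<subseteq> S" shows "conv k (dword k A) (decl k S A)"
proof -
  have gA: "gd k A" using gd_sub assms by blast
  have dp: "distinct (dword k A)" "set (dword k A) = A" "okd k (dword k A)" using dword_props[OF gA] by blast+
  have dl: "set (decl k S A) = A" "decr k S (decl k S A)" using decl_props[OF assms] by blast+
  have Sk: "S \<subseteq> {0..k}" using assms(1) unfolding gd_def by blast
  show ?thesis
  proof (rule swap_conv)
    show "distinct (dword k A)" "okd k (dword k A)" using dp by blast+
    show "distinct (decl k S A)" using dl decr_distinct by blast
    show "set (dword k A) = set (decl k S A)" using dp dl by simp
    show "set (decl k S A) \<subseteq> {0..k}" using dl Sk assms(2) by simp
    show "okd k (decl k S A)" using decr_okd[OF assms(1) dl(2)] dl(1) assms(2) by simp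
  qed
qed

lemma word_conv: assumes "gd k S" "A \<subseteq> S" "B \<subseteq> S"
  shows "conv k (dword k A @ iword k B) (decl k S A @ incl k S B)"
proof -
  have Sk: "S \<subseteq> {0..k}" using assms(1) unfolding gd_def by blast
  have s1: "set (iword k B) \<subseteq> {0..k}"
    using dword_props(2)[OF gd_sub[OF assms(1,3)]] Sk assms(3) unfolding iword_def by simp
  have s2: "set (decl k S A) \<subseteq> {0..k}" using decl_props(1)[OF assms(1,2)] Sk assms(2) by simp
  have 1: "conv k ([] @ dword k A @ iword k B) ([] @ decl k S A @ iword k B)"
    using conv_app[OF dword_conv[OF assms(1,2)], of "[]" "iword k B"] s1 by simp
  have 2: "conv k (decl k S A @ iword k B @ []) (decl k S A @ incl k S B @ [])"
    using conv_app[OF conv_rev[OF dword_conv[OF assms(1,3)]], of "decl k S A" "[]"] s2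
    unfolding iword_def incl_def by simp
  show ?thesis using 1 2 by (simp add: rtranclp_trans)
qed



lemma wd_split: assumes "n \<le> length w"
  shows "wd u (take n w) * wd v (drop n w) = (if n = length u \<and> w = u @ v then 1 else 0)"
proof (cases "take n w = u \<and> drop n w = v")
  case True
  then have "n = length u" using assms by auto
  moreover have "w = u @ v" using True by (metis append_take_drop_id)
  ultimately show ?thesis using True unfolding wd_def by simp
next
  case False
  have "\<not> (n = length u \<and> w = u @ v)" using False by auto
  then show ?thesis using False unfolding wd_def by auto
qed

lemma wd_sum_split: "(\<Sum>n\<le>length w. wd u (take n w) * wd v (drop n w)) = wd (u @ v) w"
proof -
  have "(\<Sum>n\<le>length w. wd u (take n w) * wd v (drop n w))
      = (\<Sum>n\<le>length w. (if n = length u then (if w = u @ v then 1 else 0) else 0))"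
    by (rule sum.cong) (auto simp: wd_split)
  also have "\<dots> = (if length u \<le> length w then (if w = u @ v then 1 else 0) else 0)"
    by (simp add: sum.delta)
  also have "\<dots> = wd (u @ v) w" unfolding wd_def by auto
  finally show ?thesis .
qed

lemma fmul_sum: assumes "finite X" "finite Y"
  shows "fmul (\<lambda>w. \<Sum>x\<in>X. wd (f x) w) (\<lambda>w. \<Sum>y\<in>Y. wd (g y) w)
       = (\<lambda>w. \<Sum>z\<in>X \<times> Y. wd (f (fst z) @ g (snd z)) w)"
proof
  fix w
  have "fmul (\<lambda>w. \<Sum>x\<in>X. wd (f x) w) (\<lambda>w. \<Sum>y\<in>Y. wd (g y) w) w
     = (\<Sum>n\<le>length w. \<Sum>x\<in>X. \<Sum>y\<in>Y. wd (f x) (take n w) * wd (g y) (drop n w))"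
    unfolding fmul_def by (simp add: sum_product)
  also have "\<dots> = (\<Sum>x\<in>X. \<Sum>n\<le>length w. \<Sum>y\<in>Y. wd (f x) (take n w) * wd (g y) (drop n w))"
    by (rule sum.swap)
  also have "\<dots> = (\<Sum>x\<in>X. \<Sum>y\<in>Y. \<Sum>n\<le>length w. wd (f x) (take n w) * wd (g y) (drop n w))"
    by (rule sum.cong[OF refl], rule sum.swap)
  also have "\<dots> = (\<Sum>x\<in>X. \<Sum>y\<in>Y. wd (f x @ g y) w)"
    by (simp add: wd_sum_split)
  also have "\<dots> = (\<Sum>z\<in>X \<times> Y. wd (f (fst z) @ g (snd z)) w)"
    by (simp add: sum.cartesian_product case_prod_beta)
  finally show "fmul (\<lambda>w. \<Sum>x\<in>X. wd (f x) w) (\<lambda>w. \<Sum>y\<in>Y. wd (g y) w) w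
     = (\<Sum>z\<in>X \<times> Y. wd (f (fst z) @ g (snd z)) w)" .
qed

definition SS :: "nat \<Rightarrow> nat \<Rightarrow> nat set set" where
  "SS k s = {A. A \<subseteq> {0..k} \<and> card A = s}"

lemma SS_finite: "finite (SS k s)"
proof -
  have "SS k s \<subseteq> Pow {0..k}" unfolding SS_def by auto
  then show ?thesis by (rule finite_subset) simp
qed

lemma hh_eq: "hh k s = (\<lambda>w. \<Sum>A\<in>SS k s. wd (dword k A) w)"
  unfolding hh_def SS_def by simp

lemma ee_eq: "ee k s = (\<lambda>w. \<Sum>A\<in>SS k s. wd (iword k A) w)"
  unfolding ee_def SS_def by simp

lemma gd_card: assumes "S \<subseteq> {0..k}" "card S \<le> k" shows "gd k S"
proof -
  have "S \<noteq> {0..k}" using assms(2) by auto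
  then have "\<exists>a\<le>k. a \<notin> S" using assms(1) by auto
  then show ?thesis using assms(1) unfolding gd_def by blast
qed

definition Phi :: "nat \<Rightarrow> nat set \<times> nat set \<Rightarrow> nat list" where
  "Phi k z = decl k (fst z \<union> snd z) (fst z) @ incl k (fst z \<union> snd z) (snd z)"

lemma gd_union: assumes "A \<in> SS k a" "B \<in> SS k b" "a + b \<le> k" shows "gd k (A \<union> B)"
proof -
  have f: "finite A" "finite B" using assms unfolding SS_def by (auto intro: finite_subset)
  have "card (A \<union> B) \<le> card A + card B" by (rule card_Un_le)
  moreover have "card A = a" "card B = b" "A \<subseteq> {0..k}" "B \<subseteq> {0..k}" using assms(1,2) unfolding SS_def by auto
  ultimately show ?thesis using assms(3) by (intro gd_card) auto
qed

lemma prod_Aeq: assumes "a + b \<le> k"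
  shows "Aeq k (fmul (hh k a) (ee k b)) (\<lambda>w. \<Sum>z\<in>SS k a \<times> SS k b. wd (Phi k z) w)"
proof -
  have "fmul (hh k a) (ee k b) = (\<lambda>w. \<Sum>z\<in>SS k a \<times> SS k b. wd (dword k (fst z) @ iword k (snd z)) w)"
    unfolding hh_eq ee_eq by (rule fmul_sum[OF SS_finite SS_finite])
  moreover have "Aeq k (\<lambda>w. \<Sum>z\<in>SS k a \<times> SS k b. wd (dword k (fst z) @ iword k (snd z)) w)
                       (\<lambda>w. \<Sum>z\<in>SS k a \<times> SS k b. wd (Phi k z) w)"
  proof (rule Aeq_sum)
    show "finite (SS k a \<times> SS k b)" using SS_finite by simp
    fix z assume z: "z \<in> SS k a \<times> SS k b"
    have z1: "fst z \<in> SS k a" "snd z \<in> SS k b" using z by (auto simp: mem_Times_iff)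
    have g: "gd k (fst z \<union> snd z)" using gd_union[OF z1 assms] .
    have "conv k (dword k (fst z) @ iword k (snd z)) (Phi k z)"
      unfolding Phi_def by (rule word_conv[OF g]) auto
    then show "Aeq k (wd (dword k (fst z) @ iword k (snd z))) (wd (Phi k z))"
      by (rule conv_Aeq)
  qed
  ultimately show ?thesis by simp
qed

definition Pa :: "nat \<Rightarrow> nat \<Rightarrow> nat \<Rightarrow> nat list \<Rightarrow> bool" where
  "Pa k a r w \<longleftrightarrow> set w \<subseteq> {0..k} \<and> length w = r \<and> decr k (set w) (take a w) \<and> incr k (set w) (drop a w)"

lemma gd_word: "set w \<subseteq> {0..k} \<Longrightarrow> length w \<le> k \<Longrightarrow> gd k (set w)"
  by (rule gd_card) (auto intro: le_trans[OF card_length])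

lemma Phi_count: assumes "a + b \<le> k"
  shows "{z \<in> SS k a \<times> SS k b. Phi k z = w} = (if Pa k a (a+b) w then {(set (take a w), set (drop a w))} else {})"
proof (cases "Pa k a (a+b) w")
  case True
  then have P: "set w \<subseteq> {0..k}" "length w = a + b" "decr k (set w) (take a w)" "incr k (set w) (drop a w)"
    unfolding Pa_def by auto
  have g: "gd k (set w)" using gd_word P assms by simp
  have sub1: "set (take a w) \<subseteq> set w" "set (drop a w) \<subseteq> set w" by (auto dest: in_set_takeD in_set_dropD)
  have un: "set (take a w) \<union> set (drop a w) = set w" by (metis append_take_drop_id set_append)
  have "Phi k (set (take a w), set (drop a w)) = w"
    unfolding Phi_def using decl_eq[OF g P(3) sub1(1)] incl_eq[OF g P(4) sub1(2)] un by simp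
  moreover have "(set (take a w), set (drop a w)) \<in> SS k a \<times> SS k b"
  proof -
    have "card (set (take a w)) = a" using decr_distinct[OF P(3)] P(2) by (simp add: distinct_card)
    moreover have "card (set (drop a w)) = b" using incr_distinct[OF P(4)] P(2) by (simp add: distinct_card)
    ultimately show ?thesis using sub1 P(1) unfolding SS_def by auto
  qed
  moreover have "z = (set (take a w), set (drop a w))" if "z \<in> SS k a \<times> SS k b" "Phi k z = w" for z
  proof -
    obtain A B where z: "z = (A, B)" by fastforce
    have AB: "A \<in> SS k a" "B \<in> SS k b" using that z by auto
    have gu: "gd k (A \<union> B)" using gd_union[OF AB assms] .
    have sub: "A \<subseteq> A \<union> B" "B \<subseteq> A \<union> B" by auto
    have cA: "card A = a" using AB unfolding SS_def by simp
    have l: "length (decl k (A \<union> B) A) = a"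
      using distinct_card[OF decr_distinct[OF decl_props(2)[OF gu sub(1)]]] decl_props(1)[OF gu sub(1)] cA by simp
    have w: "w = decl k (A \<union> B) A @ incl k (A \<union> B) B" using that z unfolding Phi_def by simp
    have "take a w = decl k (A \<union> B) A" "drop a w = incl k (A \<union> B) B" using w l by auto
    then show ?thesis using z decl_props[OF gu sub(1)] incl_props[OF gu sub(2)] by simp
  qed
  ultimately have "{z \<in> SS k a \<times> SS k b. Phi k z = w} = {(set (take a w), set (drop a w))}"
    by blast
  then show ?thesis using True by simp
next
  case False
  have "Phi k z \<noteq> w" if "z \<in> SS k a \<times> SS k b" for z
  proof
    assume pw: "Phi k z = w"
    obtain A B where z: "z = (A, B)" by fastforce
    have AB: "A \<in> SS k a" "B \<in> SS k b" using that z by auto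
    have gu: "gd k (A \<union> B)" using gd_union[OF AB assms] .
    have sub: "A \<subseteq> A \<union> B" "B \<subseteq> A \<union> B" by auto
    have d1: "set (decl k (A \<union> B) A) = A" "decr k (A \<union> B) (decl k (A \<union> B) A)" using decl_props[OF gu sub(1)] by auto
    have d2: "set (incl k (A \<union> B) B) = B" "incr k (A \<union> B) (incl k (A \<union> B) B)" using incl_props[OF gu sub(2)] by auto
    have cA: "card A = a" "card B = b" using AB unfolding SS_def by simp_all
    have l: "length (decl k (A \<union> B) A) = a"
      using distinct_card[OF decr_distinct[OF d1(2)]] d1(1) cA by simp
    have l2: "length (incl k (A \<union> B) B) = b"
      using distinct_card[OF incr_distinct[OF d2(2)]] d2(1) cA by simp
    have w: "w = decl k (A \<union> B) A @ incl k (A \<union> B) B" using pw z unfolding Phi_def by simp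
    have sw: "set w = A \<union> B" using w d1 d2 by simp
    have tw: "take a w = decl k (A \<union> B) A" "drop a w = incl k (A \<union> B) B" using w l by auto
    have "A \<subseteq> {0..k}" "B \<subseteq> {0..k}" using AB unfolding SS_def by auto
    then have "set w \<subseteq> {0..k}" using sw by simp
    moreover have "length w = a + b" using w l l2 by simp
    ultimately have "Pa k a (a+b) w" unfolding Pa_def using tw d1(2) d2(2) sw by simp
    then show False using False by simp
  qed
  then have "{z \<in> SS k a \<times> SS k b. Phi k z = w} = {}" by blast
  then show ?thesis using False by simp
qed

lemma Phi_sum: assumes "a + b \<le> k"
  shows "(\<lambda>w. \<Sum>z\<in>SS k a \<times> SS k b. wd (Phi k z) w) = (\<lambda>w. if Pa k a (a+b) w then 1 else 0)"
proof
  fix w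
  have "(\<Sum>z\<in>SS k a \<times> SS k b. wd (Phi k z) w) = (\<Sum>z\<in>SS k a \<times> SS k b. if Phi k z = w then 1 else 0)"
    unfolding wd_def by (rule sum.cong) auto
  also have "\<dots> = (\<Sum>z\<in>{z \<in> SS k a \<times> SS k b. Phi k z = w}. 1)"
    by (rule sum.inter_filter[symmetric]) (simp add: SS_finite)
  also have "\<dots> = (if Pa k a (a+b) w then 1 else 0)" unfolding Phi_count[OF assms] by simp
  finally show "(\<Sum>z\<in>SS k a \<times> SS k b. wd (Phi k z) w) = (if Pa k a (a+b) w then 1 else 0)" .
qed



lemma decr_take_nth: assumes "decr k S (take m u)" "Suc t < m" "Suc t < length u"
  shows "rk k S (u ! Suc t) < rk k S (u ! t)"
proof -
  have "rk k S (take m u ! Suc t) < rk k S (take m u ! t)"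
    using sorted_wrt_nth_less[OF assms(1)[unfolded decr_def], of t "Suc t"] assms(2,3) by simp
  then show ?thesis using assms(2) by simp
qed

lemma incr_drop_nth: assumes "incr k S (drop m u)" "m \<le> t" "Suc t < length u"
  shows "rk k S (u ! t) < rk k S (u ! Suc t)"
proof -
  have "rk k S (drop m u ! (t - m)) < rk k S (drop m u ! (Suc t - m))"
    using sorted_wrt_nth_less[OF assms(1)[unfolded incr_def], of "t - m" "Suc t - m"] assms(2,3) by simp
  then show ?thesis using assms(2,3) by simp
qed

lemma asc_V: assumes "Vshape k u p" "p < length u" shows "asc k u = length u - p - 1"
proof -
  have e: "{t. Suc t < length u \<and> rk k (set u) (u ! t) < rk k (set u) (u ! Suc t)} = {p..<length u - 1}"
  proof (intro set_eqI iffI)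
    fix t assume t: "t \<in> {t. Suc t < length u \<and> rk k (set u) (u ! t) < rk k (set u) (u ! Suc t)}"
    have "\<not> t < p"
    proof
      assume "t < p"
      then have "rk k (set u) (u ! Suc t) < rk k (set u) (u ! t)"
        using decr_take_nth[of k "set u" "Suc p" u t] assms t unfolding Vshape_def by simp
      then show False using t by simp
    qed
    moreover have "Suc t < length u" using t by simp
    ultimately show "t \<in> {p..<length u - 1}" by simp
  next
    fix t assume t: "t \<in> {p..<length u - 1}"
    then show "t \<in> {t. Suc t < length u \<and> rk k (set u) (u ! t) < rk k (set u) (u ! Suc t)}"
      using incr_drop_nth[of k "set u" p u t] assms unfolding Vshape_def by auto
  qed
  show ?thesis unfolding asc_def e by simp
qed

lemma asc_V2: assumes "Vshape k u p" "length u \<le> p" shows "asc k u = 0"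
proof -
  have e: "{t. Suc t < length u \<and> rk k (set u) (u ! t) < rk k (set u) (u ! Suc t)} = {}"
  proof (intro set_eqI iffI)
    fix t assume t: "t \<in> {t. Suc t < length u \<and> rk k (set u) (u ! t) < rk k (set u) (u ! Suc t)}"
    then have "rk k (set u) (u ! Suc t) < rk k (set u) (u ! t)"
      using decr_take_nth[of k "set u" "Suc p" u t] assms unfolding Vshape_def by simp
    then show "t \<in> {}" using t by simp
  qed simp
  show ?thesis unfolding asc_def e by simp
qed

lemma asc_U: assumes "Ushape k u p" shows "asc k u = length u - p - 2"
proof -
  have e: "{t. Suc t < length u \<and> rk k (set u) (u ! t) < rk k (set u) (u ! Suc t)} = {Suc p..<length u - 1}"
  proof (intro set_eqI iffI)
    fix t assume t: "t \<in> {t. Suc t < length u \<and> rk k (set u) (u ! t) < rk k (set u) (u ! Suc t)}"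
    have "\<not> t < p"
    proof
      assume "t < p"
      then have "rk k (set u) (u ! Suc t) < rk k (set u) (u ! t)"
        using decr_take_nth[of k "set u" "Suc p" u t] assms t unfolding Ushape_def by simp
      then show False using t by simp
    qed
    moreover have "t \<noteq> p" using t assms unfolding Ushape_def by auto
    moreover have "Suc t < length u" using t by simp
    ultimately show "t \<in> {Suc p..<length u - 1}" by simp
  next
    fix t assume t: "t \<in> {Suc p..<length u - 1}"
    then show "t \<in> {t. Suc t < length u \<and> rk k (set u) (u ! t) < rk k (set u) (u ! Suc t)}"
      using incr_drop_nth[of k "set u" "Suc p" u t] assms unfolding Ushape_def by auto
  qed
  show ?thesis unfolding asc_def e by simp
qed

lemma sorted_wrt_short: "length xs \<le> 1 \<Longrightarrow> sorted_wrt P xs"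
  by (cases xs) auto

lemma proper_of: assumes "set w \<subseteq> {0..k}" "length w \<le> k" shows "properword k w"
proof -
  have "gd k (set w)" using gd_word assms by blast
  then obtain a where "a \<le> k" "a \<notin> set w" unfolding gd_def by blast
  then have "set w \<noteq> {0..k}" by auto
  then show ?thesis unfolding properword_def using assms by simp
qed

lemma VU_disj: assumes "Vshape k w q" "Ushape k w p" shows False
proof (cases "p < q")
  case True
  have "rk k (set w) (w ! Suc p) < rk k (set w) (w ! p)"
    using decr_take_nth[of k "set w" "Suc q" w p] assms True unfolding Vshape_def Ushape_def by simp
  then show False using assms(2) unfolding Ushape_def by simp
next
  case False
  have "rk k (set w) (w ! p) < rk k (set w) (w ! Suc p)"
    using incr_drop_nth[of k "set w" q w p] assms False unfolding Vshape_def Ushape_def by simp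
  then show False using assms(2) unfolding Ushape_def by simp
qed

lemma V_Pa: assumes "w \<in> Vset k r (int b)" "a + b = r" shows "Pa k a r w"
proof -
  obtain p where V: "Vshape k w p" and pr: "properword k w" and l: "length w = r" and as: "asc k w = b"
    using assms unfolding Vset_def isV_def by auto
  show ?thesis
  proof (cases "p < length w")
    case True
    then have "Suc p = a" using asc_V[OF V True] l as assms(2) by simp
    moreover have "incr k (set w) (drop 1 (drop p w))"
      unfolding incr_def by (rule sorted_wrt_drop) (use V in \<open>simp add: Vshape_def incr_def\<close>)
    then have "incr k (set w) (drop (Suc p) w)" by simp
    ultimately show ?thesis using V pr l unfolding Pa_def Vshape_def properword_def by auto
  next
    case False
    then have "b = 0" using asc_V2[OF V] as by simp
    then have "a = r" using assms by simp
    then show ?thesis using V pr l False unfolding Pa_def Vshape_def properword_def incr_def by auto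
  qed
qed

lemma V1_Pa: assumes "w \<in> Vset k r (int b - 1)" "a + b = r" shows "Pa k a r w"
proof -
  obtain p where V: "Vshape k w p" and pr: "properword k w" and l: "length w = r" and as: "int (asc k w) = int b - 1"
    using assms unfolding Vset_def isV_def by auto
  show ?thesis
  proof (cases "p < length w")
    case True
    then have "p = a" using asc_V[OF V True] l as assms(2) by simp
    moreover have "decr k (set w) (take a (take (Suc a) w))"
      using V \<open>p = a\<close> unfolding Vshape_def decr_def by (metis sorted_wrt_take)
    ultimately show ?thesis using V pr l unfolding Pa_def Vshape_def properword_def by (simp add: min_def)
  next
    case False
    then have "b = 1" using asc_V2[OF V] as by simp
    then have a: "a = r - 1" using assms by simp
    have "decr k (set w) (take a (take (Suc p) w))"
      using V unfolding Vshape_def decr_def by (metis sorted_wrt_take)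
    then have "decr k (set w) (take a w)" using False by (simp add: min_def)
    moreover have "incr k (set w) (drop a w)" unfolding incr_def using a l by (intro sorted_wrt_short) simp
    ultimately show ?thesis using pr l unfolding Pa_def properword_def by auto
  qed
qed

lemma U_Pa: assumes "w \<in> Uset k r (int b - 1)" "a + b = r" shows "Pa k a r w"
proof -
  obtain p where U: "Ushape k w p" and pr: "properword k w" and l: "length w = r" and as: "int (asc k w) = int b - 1"
    using assms unfolding Uset_def isU_def by auto
  have "Suc p = a" using asc_U[OF U] l as assms(2) U unfolding Ushape_def by simp
  then show ?thesis using U pr l unfolding Pa_def Ushape_def properword_def by auto
qed

lemma Pa_cases: assumes "Pa k a r w" "a + b = r" "r \<le> k"
  shows "w \<in> Vset k r (int b) \<or> w \<in> Vset k r (int b - 1) \<or> w \<in> Uset k r (int b - 1)"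
proof -
  have P: "set w \<subseteq> {0..k}" "length w = r" "decr k (set w) (take a w)" "incr k (set w) (drop a w)"
    using assms(1) unfolding Pa_def by auto
  have pr: "properword k w" using proper_of P assms by simp
  have g: "gd k (set w)" using gd_word P assms by simp
  show ?thesis
  proof (cases "a = 0")
    case a0: True
    show ?thesis
    proof (cases "r = 0")
      case True
      then have "w = []" "b = 0" using P a0 assms by auto
      then have "Vshape k w 0" "asc k w = 0" unfolding Vshape_def decr_def incr_def asc_def by auto
      then have "w \<in> Vset k r (int b)" using pr P \<open>b = 0\<close> unfolding Vset_def isV_def by auto
      then show ?thesis by blast
    next
      case False
      have V: "Vshape k w 0" unfolding Vshape_def using P a0
        by (auto simp: decr_def intro: sorted_wrt_short)
      have "asc k w = r - 1" using asc_V[OF V] P False by simp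
      then have "w \<in> Vset k r (int b - 1)" using pr P V False a0 assms unfolding Vset_def isV_def by auto
      then show ?thesis by blast
    qed
  next
    case a1: False
    show ?thesis
    proof (cases "b = 0")
      case True
      have V: "Vshape k w (r - 1)" unfolding Vshape_def using P a1 True assms
        by (auto simp: incr_def intro: sorted_wrt_short)
      have "asc k w = 0" using asc_V[OF V] P a1 True assms by simp
      then have "w \<in> Vset k r (int b)" using pr P V True unfolding Vset_def isV_def by auto
      then show ?thesis by blast
    next
      case b1: False
      have aw: "a < length w" using P assms b1 by simp
      define x where "x = w ! (a - 1)"
      define y where "y = w ! a"
      have dy: "drop a w = y # drop (Suc a) w" unfolding y_def using aw by (simp add: Cons_nth_drop_Suc)
      have "take (Suc (a - 1)) w = take (a - 1) w @ [w ! (a - 1)]"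
        by (rule take_Suc_conv_app_nth) (use aw in simp)
      then have tx: "take a w = take (a - 1) w @ [x]" unfolding x_def using a1 by simp
      have xy: "x \<in> set w" "y \<in> set w" unfolding x_def y_def using aw by auto
      have ya: "\<forall>z\<in>set (drop (Suc a) w). rk k (set w) y < rk k (set w) z"
        using P(4) dy unfolding incr_def by simp
      have xa: "\<forall>z\<in>set (take (a - 1) w). rk k (set w) x < rk k (set w) z"
        using P(3) tx unfolding decr_def by (simp add: sorted_wrt_append)
      consider "rk k (set w) x < rk k (set w) y" | "rk k (set w) y < rk k (set w) x" | "rk k (set w) x = rk k (set w) y"
        by linarith
      then show ?thesis
      proof cases
        case 1
        have "w ! (a - 1) # drop (Suc (a - 1)) w = drop (a - 1) w"
          by (rule Cons_nth_drop_Suc) (use aw in simp)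
        then have dx: "drop (a - 1) w = x # drop a w" unfolding x_def using a1 by simp
        have "incr k (set w) (drop (a - 1) w)" unfolding dx using P(4) 1 ya dy unfolding incr_def
          by auto
        then have V: "Vshape k w (a - 1)" unfolding Vshape_def using P a1 by simp
        have "asc k w = b" using asc_V[OF V] P a1 aw assms by simp
        then have "w \<in> Vset k r (int b)" using pr P V unfolding Vset_def isV_def by auto
        then show ?thesis by blast
      next
        case 2
        have ty: "take (Suc a) w = take a w @ [y]" unfolding y_def using aw by (simp add: take_Suc_conv_app_nth)
        have "decr k (set w) (take (Suc a) w)" unfolding ty using P(3) 2 xa tx unfolding decr_def
          by (auto simp: sorted_wrt_append)
        then have V: "Vshape k w a" unfolding Vshape_def using P by simp
        have "asc k w = b - 1" using asc_V[OF V aw] P assms by simp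
        then have "w \<in> Vset k r (int b - 1)" using pr P V b1 unfolding Vset_def isV_def by auto
        then show ?thesis by blast
      next
        case 3
        have xk: "x \<le> k" "y \<le> k" using xy P by auto
        have "x = y" using rk_inj[OF g xk 3] .
        then have U: "Ushape k w (a - 1)" unfolding Ushape_def using P a1 aw unfolding x_def y_def by simp
        have "asc k w = b - 1" using asc_U[OF U] P a1 assms by simp
        then have "w \<in> Uset k r (int b - 1)" using pr P U b1 unfolding Uset_def isU_def by auto
        then show ?thesis by blast
      qed
    qed
  qed
qed

lemma D_eq: assumes "a + b = r" "r \<le> k"
  shows "(if Pa k a r w then 1 else 0) = Ind (Vset k r (int b)) w + Ind (Vset k r (int b - 1)) w + Ind (Uset k r (int b - 1)) w"
proof -
  have d1: "\<not> (w \<in> Vset k r (int b) \<and> w \<in> Vset k r (int b - 1))"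
  proof
    assume "w \<in> Vset k r (int b) \<and> w \<in> Vset k r (int b - 1)"
    then have "int (asc k w) = int b" "int (asc k w) = int b - 1" unfolding Vset_def by blast+
    then show False by simp
  qed
  have d2: "\<not> (w \<in> Vset k r c \<and> w \<in> Uset k r c')" for c c'
  proof
    assume "w \<in> Vset k r c \<and> w \<in> Uset k r c'"
    then obtain p q where "Vshape k w q" "Ushape k w p" unfolding Vset_def Uset_def isV_def isU_def by blast
    then show False by (rule VU_disj)
  qed
  show ?thesis
  proof (cases "Pa k a r w")
    case True
    have "w \<in> Vset k r (int b) \<or> w \<in> Vset k r (int b - 1) \<or> w \<in> Uset k r (int b - 1)"
      using Pa_cases[OF True assms] .
    then show ?thesis using True d1 d2[of "int b" "int b - 1"] d2[of "int b - 1" "int b - 1"] unfolding Ind_def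
      by (elim disjE) simp_all
  next
    case False
    have "w \<notin> Vset k r (int b)" using V_Pa[OF _ assms(1)] False by blast
    moreover have "w \<notin> Vset k r (int b - 1)" using V1_Pa[OF _ assms(1)] False by blast
    moreover have "w \<notin> Uset k r (int b - 1)" using U_Pa[OF _ assms(1)] False by blast
    ultimately show ?thesis using False unfolding Ind_def by simp
  qed
qed



lemma kconn_set: "set u = set v \<Longrightarrow> kconn k u = kconn k v"
  unfolding kconn_def by simp

lemma gap_set: "set u = set v \<Longrightarrow> gapletter k u = gapletter k v"
  unfolding gapletter_def by simp

lemma umin_set: "set u = set v \<Longrightarrow> umin k u = umin k v"
  unfolding umin_def using gap_set by metis

lemma wconn_perm: assumes "set u = set v" "\<And>x. count_list u x = count_list v x"
  shows "wconn k u = wconn k v"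
  unfolding wconn_def using kconn_set[OF assms(1)] umin_set[OF assms(1)] assms(2) by simp

lemma gap_exists: assumes g: "gd k (set u)" and nk: "\<not> kconn k u" shows "\<exists>c. gapletter k u c"
proof -
  let ?S = "set u"
  let ?r = "rk k ?S"
  have Sk: "?S \<subseteq> {0..k}" using g unfolding gd_def by blast
  obtain x z y where xz: "x \<in> ?S" "z \<in> ?S" "y \<le> k" "?r x \<le> ?r y" "?r y \<le> ?r z" "y \<notin> ?S"
    using nk unfolding kconn_def by blast
  have xk: "x \<le> k" "z \<le> k" using xz Sk by auto
  have "?r x \<noteq> ?r y" using rk_inj[OF g xk(1) xz(3)] xz by auto
  then have xy: "?r x < ?r y" using xz by simp
  have "?r z \<noteq> ?r y" using rk_inj[OF g xk(2) xz(3)] xz by auto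
  then have yz: "?r y < ?r z" using xz by simp
  define A where "A = {v \<in> ?S. ?r v < ?r y}"
  define C where "C = {v \<in> ?S. ?r y < ?r v}"
  have fA: "finite A" "A \<noteq> {}" unfolding A_def using xz xy by auto
  have fC: "finite C" "C \<noteq> {}" unfolding C_def using xz yz by auto
  have "Max (?r ` A) \<in> ?r ` A" using fA by (intro Max_in) auto
  then obtain a where a: "a \<in> A" "?r a = Max (?r ` A)" by (metis imageE)
  have amax: "\<And>v. v \<in> A \<Longrightarrow> ?r v \<le> ?r a" using a fA by simp
  have "Min (?r ` C) \<in> ?r ` C" using fC by (intro Min_in) auto
  then obtain c where c: "c \<in> C" "?r c = Min (?r ` C)" by (metis imageE)
  have cmin: "\<And>v. v \<in> C \<Longrightarrow> ?r c \<le> ?r v" using c fC by simp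
  have aS: "a \<in> ?S" "?r a < ?r y" using a unfolding A_def by auto
  have cS: "c \<in> ?S" "?r y < ?r c" using c unfolding C_def by auto
  have "gapletter k u c" unfolding gapletter_def
  proof (intro conjI bexI[of _ a])
    show "c \<in> ?S" "a \<in> ?S" using aS cS by auto
    show "?r a < ?r c" using aS cS by simp
    show "c \<noteq> (a + 1) mod (k + 1)"
    proof
      assume h: "c = (a + 1) mod (k + 1)"
      then have "?r c = ?r a + 1" using rk_succ[OF g aS(1)] cS by simp
      then show False using aS cS by simp
    qed
    show "\<not> (\<exists>b\<in>?S. ?r a < ?r b \<and> ?r b < ?r c)"
    proof
      assume "\<exists>b\<in>?S. ?r a < ?r b \<and> ?r b < ?r c"
      then obtain b where b: "b \<in> ?S" "?r a < ?r b" "?r b < ?r c" by blast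
      have "b \<le> k" using b Sk by auto
      then have "?r b \<noteq> ?r y" using rk_inj[OF g _ xz(3)] b xz(6) by auto
      then consider "?r b < ?r y" | "?r y < ?r b" by linarith
      then show False
      proof cases
        case 1 then have "b \<in> A" unfolding A_def using b by simp
        then show False using amax b by fastforce
      next
        case 2 then have "b \<in> C" unfolding C_def using b by simp
        then show False using cmin b by fastforce
      qed
    qed
  qed
  then show ?thesis by blast
qed

lemma umin_exists: assumes g: "gd k (set u)" and nk: "\<not> kconn k u" shows "\<exists>c. umin k u c"
proof -
  let ?r = "rk k (set u)"
  define G where "G = {c. gapletter k u c}"
  have "G \<subseteq> set u" unfolding G_def gapletter_def by auto
  then have fG: "finite G" by (rule finite_subset) simp
  have nG: "G \<noteq> {}" using gap_exists[OF g nk] unfolding G_def by auto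
  have "Min (?r ` G) \<in> ?r ` G" using fG nG by (intro Min_in) auto
  then obtain c where c: "c \<in> G" "?r c = Min (?r ` G)" by (metis imageE)
  have "\<And>v. v \<in> G \<Longrightarrow> ?r c \<le> ?r v" using c fG by simp
  then have "umin k u c" unfolding umin_def using c unfolding G_def by auto
  then show ?thesis by blast
qed

lemma umin_unique: assumes g: "gd k (set u)" and "umin k u c" "umin k u c'" shows "c = c'"
proof -
  have "c \<in> set u" "c' \<in> set u" using assms unfolding umin_def gapletter_def by auto
  then have "c \<le> k" "c' \<le> k" using g unfolding gd_def by auto
  moreover have "rk k (set u) c = rk k (set u) c'" using assms unfolding umin_def by (meson le_antisym)
  ultimately show ?thesis using rk_inj[OF g] by blast
qed

definition cm :: "nat \<Rightarrow> nat list \<Rightarrow> nat" where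
  "cm k u = (THE c. umin k u c)"

lemma cm_eq: assumes "gd k (set u)" "umin k u c" shows "cm k u = c"
  unfolding cm_def using umin_unique[OF assms(1)] assms(2) by blast

lemma gap_nonadj: assumes g: "gd k (set u)" and gc: "gapletter k u c" and x: "x \<in> set u"
  and lt: "rk k (set u) x < rk k (set u) c"
  shows "x \<le> k \<and> \<not> cadj k x c"
proof -
  let ?S = "set u"
  let ?r = "rk k ?S"
  have Sk: "?S \<subseteq> {0..k}" using g unfolding gd_def by blast
  obtain a where a: "a \<in> ?S" "?r a < ?r c" "c \<noteq> (a + 1) mod (k + 1)"
    "\<not> (\<exists>b\<in>?S. ?r a < ?r b \<and> ?r b < ?r c)" using gc unfolding gapletter_def by blast
  have cS: "c \<in> ?S" using gc unfolding gapletter_def by blast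
  have "\<not> cadj k x c"
  proof
    assume "cadj k x c"
    then consider "c = (x + 1) mod (k + 1)" | "x = (c + 1) mod (k + 1)" unfolding cadj_def by blast
    then show False
    proof cases
      case 1
      then have rc: "?r c = ?r x + 1" using rk_succ[OF g x] cS by simp
      have "\<not> ?r a < ?r x" using a(4) x lt by blast
      moreover have "\<not> ?r x < ?r a" using rc a(2) by simp
      ultimately have "?r x = ?r a" by simp
      moreover have "x \<le> k" "a \<le> k" using x a(1) Sk by auto
      ultimately have "x = a" using rk_inj[OF g] by blast
      then show False using 1 a(3) by simp
    next
      case 2
      then have "?r x = ?r c + 1" using rk_succ[OF g cS] x by simp
      then show False using lt by simp
    qed
  qed
  then show ?thesis using x Sk by auto
qed

lemma filter_eq_c: "distinct xs \<Longrightarrow> filter (\<lambda>x. x = c) xs = (if c \<in> set xs then [c] else [])"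
  by (induction xs) auto

lemma decr_split: assumes "decr k S xs" "\<forall>x\<in>set xs. x \<noteq> c \<longrightarrow> rk k S x \<noteq> rk k S c"
  shows "xs = filter (\<lambda>x. rk k S c < rk k S x) xs @ filter (\<lambda>x. x = c) xs @ filter (\<lambda>x. rk k S x < rk k S c) xs"
  using assms
proof (induction xs)
  case Nil then show ?case by simp
next
  case (Cons x xs)
  have d: "\<forall>z\<in>set xs. rk k S z < rk k S x" "decr k S xs" using Cons.prems(1) unfolding decr_def by auto
  have ih: "xs = filter (\<lambda>x. rk k S c < rk k S x) xs @ filter (\<lambda>x. x = c) xs @ filter (\<lambda>x. rk k S x < rk k S c) xs"
    using Cons.IH d(2) Cons.prems(2) by simp
  consider "rk k S c < rk k S x" | "x = c" | "rk k S x < rk k S c"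
    using Cons.prems(2) by force
  then show ?case
  proof cases
    case 1
    then have "x \<noteq> c" by auto
    then show ?thesis using 1 ih by simp
  next
    case 2
    have "filter (\<lambda>x. rk k S c < rk k S x) xs = []" using d 2 by (auto simp: filter_empty_conv)
    moreover have "filter (\<lambda>x. x = c) xs = []" using d 2 by (auto simp: filter_empty_conv)
    moreover have "filter (\<lambda>x. rk k S x < rk k S c) xs = xs" using d 2 by (auto simp: filter_id_conv)
    ultimately show ?thesis using 2 by simp
  next
    case 3
    then have "x \<noteq> c" by auto
    have "filter (\<lambda>x. rk k S c < rk k S x) xs = []" using d 3 by (auto simp: filter_empty_conv)
    moreover have "filter (\<lambda>x. x = c) xs = []" using d 3 by (auto simp: filter_empty_conv)
    moreover have "filter (\<lambda>x. rk k S x < rk k S c) xs = xs" using d 3 by (auto simp: filter_id_conv)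
    ultimately show ?thesis using 3 \<open>x \<noteq> c\<close> by simp
  qed
qed

lemma incr_split: assumes "incr k S xs" "\<forall>x\<in>set xs. x \<noteq> c \<longrightarrow> rk k S x \<noteq> rk k S c"
  shows "xs = filter (\<lambda>x. rk k S x < rk k S c) xs @ filter (\<lambda>x. x = c) xs @ filter (\<lambda>x. rk k S c < rk k S x) xs"
proof -
  have "decr k S (rev xs)" using assms(1) by (simp add: decr_rev)
  from decr_split[OF this] assms(2)
  have "rev xs = filter (\<lambda>x. rk k S c < rk k S x) (rev xs) @ filter (\<lambda>x. x = c) (rev xs) @ filter (\<lambda>x. rk k S x < rk k S c) (rev xs)"
    by simp
  then have "rev (rev xs) = rev (filter (\<lambda>x. rk k S x < rk k S c) (rev xs)) @ rev (filter (\<lambda>x. x = c) (rev xs)) @ rev (filter (\<lambda>x. rk k S c < rk k S x) (rev xs))"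
    by (metis rev_append append_assoc)
  then show ?thesis by (simp add: rev_filter[symmetric])
qed

lemma last_filter: "xs \<noteq> [] \<Longrightarrow> P (last xs) \<Longrightarrow> filter P xs \<noteq> [] \<and> last (filter P xs) = last xs"
proof -
  assume "xs \<noteq> []" "P (last xs)"
  then have "xs = butlast xs @ [last xs]" by simp
  then have "filter P xs = filter P (butlast xs) @ [last xs]" using \<open>P (last xs)\<close> by (metis filter.simps filter_append)
  then show ?thesis by simp
qed

lemma hd_filter: "ys \<noteq> [] \<Longrightarrow> P (hd ys) \<Longrightarrow> filter P ys \<noteq> [] \<and> hd (filter P ys) = hd ys"
  by (cases ys) auto



lemma mkU: assumes "set (xs @ ys) \<subseteq> {0..k}" "length (xs @ ys) \<le> k"
  "decr k (set (xs @ ys)) xs" "incr k (set (xs @ ys)) ys" "xs \<noteq> []" "ys \<noteq> []" "last xs = hd ys"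
  shows "Ushape k (xs @ ys) (length xs - 1)" "isU k (xs @ ys)" "asc k (xs @ ys) = length ys - 1"
proof -
  let ?w = "xs @ ys"
  let ?p = "length xs - 1"
  have sp: "Suc ?p = length xs" using assms(5) by simp
  have t: "take (Suc ?p) ?w = xs" "drop (Suc ?p) ?w = ys" using sp by simp_all
  have n1: "?w ! ?p = last xs" using assms(5) by (simp add: nth_append last_conv_nth)
  have n2: "?w ! Suc ?p = hd ys" using assms(6) sp by (simp add: nth_append hd_conv_nth)
  show U: "Ushape k ?w ?p" unfolding Ushape_def using t n1 n2 assms sp by simp
  show "isU k ?w" unfolding isU_def using U proper_of assms(1,2) by blast
  show "asc k ?w = length ys - 1" using asc_U[OF U] sp by simp
qed

lemma destU: assumes "Ushape k w p"
  shows "decr k (set w) (take (Suc p) w)" "incr k (set w) (drop (Suc p) w)" "take (Suc p) w \<noteq> []"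
    "drop (Suc p) w \<noteq> []" "last (take (Suc p) w) = hd (drop (Suc p) w)" "length (take (Suc p) w) = Suc p"
proof -
  have l: "Suc p < length w" "w ! p = w ! Suc p" using assms unfolding Ushape_def by auto
  show "decr k (set w) (take (Suc p) w)" "incr k (set w) (drop (Suc p) w)" using assms unfolding Ushape_def by auto
  show "take (Suc p) w \<noteq> []" "drop (Suc p) w \<noteq> []" "length (take (Suc p) w) = Suc p" using l by auto
  have "take (Suc p) w = take p w @ [w ! p]" by (rule take_Suc_conv_app_nth) (use l in simp)
  then have "last (take (Suc p) w) = w ! p" by simp
  moreover have "hd (drop (Suc p) w) = w ! Suc p" using l by (simp add: hd_drop_conv_nth)
  ultimately show "last (take (Suc p) w) = hd (drop (Suc p) w)" using l by simp
qed

lemma Ushape_unique: assumes "Ushape k w p" "Ushape k w q" shows "p = q"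
proof -
  have "Suc p < length w" "Suc q < length w" using assms unfolding Ushape_def by auto
  moreover have "length w - p - 2 = length w - q - 2" using asc_U[OF assms(1)] asc_U[OF assms(2)] by simp
  ultimately show ?thesis by arith
qed

lemma count_distinct: "distinct xs \<Longrightarrow> count_list xs c = (if c \<in> set xs then 1 else 0)"
  by (induction xs) auto

lemma filter_neq: "c \<notin> set xs \<Longrightarrow> filter (\<lambda>x. x \<noteq> c) xs = xs"
  by (induction xs) auto

definition fR :: "nat \<Rightarrow> nat \<Rightarrow> nat list \<Rightarrow> nat list" where
  "fR k a u = (let S = set u; c = cm k u in
     filter (\<lambda>x. rk k S c < rk k S x) (take a u) @ [c] @ filter (\<lambda>x. rk k S x < rk k S c) (take a u)
     @ filter (\<lambda>x. x \<noteq> c) (drop a u))"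

definition gL :: "nat \<Rightarrow> nat \<Rightarrow> nat list \<Rightarrow> nat list" where
  "gL k a v = (let S = set v; c = cm k v in
     filter (\<lambda>x. x \<noteq> c) (take (Suc a) v) @ filter (\<lambda>x. rk k S x < rk k S c) (drop (Suc a) v) @ [c]
     @ filter (\<lambda>x. rk k S c < rk k S x) (drop (Suc a) v))"

definition Rset :: "nat \<Rightarrow> nat \<Rightarrow> int \<Rightarrow> nat list set" where
  "Rset k r t = {u \<in> Uset k r t. \<not> wconn k u} - Unwcleft k r t"

lemma quad:
  fixes L1 L2 Y1 Y2 :: "nat list" and c :: nat
  defines "u0 \<equiv> L1 @ L2 @ Y1 @ [c] @ Y2" and "u1 \<equiv> L1 @ [c] @ L2 @ Y1 @ Y2"
  assumes sk: "set u0 \<subseteq> {0..k}" and lr: "length u0 = r" and rk: "r \<le> k"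
    and um: "umin k u0 c" and nw: "\<not> wconn k u0"
    and dL: "decr k (set u0) (L1 @ L2)" and iY: "incr k (set u0) (Y1 @ Y2)"
    and g1: "\<forall>x\<in>set L1. rk k (set u0) c < rk k (set u0) x"
    and g2: "\<forall>x\<in>set Y2. rk k (set u0) c < rk k (set u0) x"
    and l1: "\<forall>x\<in>set L2. rk k (set u0) x < rk k (set u0) c"
    and l2: "\<forall>x\<in>set Y1. rk k (set u0) x < rk k (set u0) c"
    and ne: "L2 \<noteq> []" "Y1 \<noteq> []" and lh: "last L2 = hd Y1"
    and an: "a = length L1 + length L2" "n = length Y1 + length Y2"
  shows "u0 \<in> Rset k r (int n)" "u1 \<in> Unwcleft k r (int n - 1)" "fR k a u0 = u1" "gL k a u1 = u0"
    "conv k u0 u1"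
proof -
  let ?S = "set u0"
  let ?r = "rk k ?S"
  have su: "set u1 = ?S" unfolding u0_def u1_def by auto
  have lu: "length u1 = r" using lr unfolding u0_def u1_def by simp
  have cu: "\<And>x. count_list u1 x = count_list u0 x" unfolding u0_def u1_def by simp
  have g: "gd k ?S" using gd_word sk lr rk by simp
  have cS: "c \<in> ?S" unfolding u0_def by simp
  have nc: "c \<notin> set L1" "c \<notin> set L2" "c \<notin> set Y1" "c \<notin> set Y2" using g1 g2 l1 l2 by auto
  have cnt: "count_list u0 c = 1" unfolding u0_def using nc by simp
  have dL1: "decr k ?S L1" "decr k ?S L2" "\<forall>x\<in>set L1. \<forall>y\<in>set L2. ?r y < ?r x"
    using dL unfolding decr_def by (auto simp: sorted_wrt_append)
  have iY1: "incr k ?S Y1" "incr k ?S Y2" "\<forall>x\<in>set Y1. \<forall>y\<in>set Y2. ?r x < ?r y"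
    using iY unfolding incr_def by (auto simp: sorted_wrt_append)
  have dx1: "decr k ?S (L1 @ [c] @ L2)" unfolding decr_def
    using dL1 g1 l1 unfolding decr_def by (auto simp: sorted_wrt_append)
  have iy0: "incr k ?S (Y1 @ [c] @ Y2)" unfolding incr_def
    using iY1 g2 l2 unfolding incr_def by (auto simp: sorted_wrt_append)
  have lastL: "last (L1 @ L2) = last L2" "last (L1 @ [c] @ L2) = last L2" using ne by simp_all
  have hdY: "hd (Y1 @ [c] @ Y2) = hd Y1" "hd (Y1 @ Y2) = hd Y1" using ne by simp_all
  have e0: "u0 = (L1 @ L2) @ (Y1 @ [c] @ Y2)" unfolding u0_def by simp
  have e1: "u1 = (L1 @ [c] @ L2) @ (Y1 @ Y2)" unfolding u1_def by simp
  have U0: "Ushape k u0 (length (L1 @ L2) - 1)" "isU k u0" "asc k u0 = length (Y1 @ [c] @ Y2) - 1"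
    using mkU[of "L1 @ L2" "Y1 @ [c] @ Y2" k] sk lr rk dL iy0 ne lastL hdY lh unfolding e0[symmetric] by auto
  have U1: "Ushape k u1 (length (L1 @ [c] @ L2) - 1)" "isU k u1" "asc k u1 = length (Y1 @ Y2) - 1"
    using mkU[of "L1 @ [c] @ L2" "Y1 @ Y2" k] sk lr rk dx1 iY ne lastL hdY lh su lu
    unfolding e1[symmetric] by auto
  have as0: "asc k u0 = n" using U0(3) an by simp
  have as1: "int (asc k u1) = int n - 1" using U1(3) an ne by (cases Y1) auto
  have wc1: "wconn k u1 = wconn k u0" using wconn_perm[OF su cu] .
  have um1: "umin k u1 c" using um umin_set[OF su] by simp
  have cm0: "cm k u0 = c" using cm_eq[OF g um] .
  have cm1: "cm k u1 = c" using cm_eq[of k u1 c] g su um1 by simp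
  show "u1 \<in> Unwcleft k r (int n - 1)"
    unfolding Unwcleft_def Uset_def
  proof (intro CollectI conjI)
    show "isU k u1" "length u1 = r" "int (asc k u1) = int n - 1" using U1(2) lu as1 by auto
    show "\<not> wconn k u1" using wc1 nw by simp
    have "take (Suc (length (L1 @ [c] @ L2) - 1)) u1 = L1 @ [c] @ L2" unfolding e1 by simp
    then show "\<exists>c. umin k u1 c \<and> count_list u1 c = 1 \<and> (\<exists>p. Ushape k u1 p \<and> c \<in> set (take (Suc p) u1))"
      using um1 cu cnt U1(1) by (intro exI[of _ c]) auto
  qed
  show "u0 \<in> Rset k r (int n)"
    unfolding Rset_def
  proof
    show "u0 \<in> {u \<in> Uset k r (int n). \<not> wconn k u}" unfolding Uset_def using U0(2) lr as0 nw by simp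
    show "u0 \<notin> Unwcleft k r (int n)"
    proof
      assume "u0 \<in> Unwcleft k r (int n)"
      then obtain c' p where h: "umin k u0 c'" "Ushape k u0 p" "c' \<in> set (take (Suc p) u0)"
        unfolding Unwcleft_def by blast
      have "c' = c" using umin_unique[OF g h(1) um] .
      moreover have "p = length (L1 @ L2) - 1" using Ushape_unique[OF h(2) U0(1)] .
      moreover have "take (Suc (length (L1 @ L2) - 1)) u0 = L1 @ L2" unfolding e0 using ne by simp
      ultimately show False using h(3) nc by auto
    qed
  qed
  have "filter (\<lambda>x. ?r c < ?r x) L2 = []" "filter (\<lambda>x. ?r x < ?r c) L1 = []"
    using g1 l1 by (intro filter_False; force)+
  moreover have "filter (\<lambda>x. ?r c < ?r x) L1 = L1" "filter (\<lambda>x. ?r x < ?r c) L2 = L2"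
    using g1 l1 by (intro filter_True; force)+
  ultimately have fl: "filter (\<lambda>x. ?r c < ?r x) (L1 @ L2) = L1" "filter (\<lambda>x. ?r x < ?r c) (L1 @ L2) = L2"
    by simp_all
  have fy: "filter (\<lambda>x. x \<noteq> c) (Y1 @ [c] @ Y2) = Y1 @ Y2" using nc by (simp add: filter_neq)
  have ta0: "take a u0 = L1 @ L2" "drop a u0 = Y1 @ [c] @ Y2" unfolding e0 an by simp_all
  have "fR k a u0 = L1 @ [c] @ L2 @ Y1 @ Y2" unfolding fR_def Let_def cm0 ta0 fl fy by simp
  then show "fR k a u0 = u1" unfolding u1_def .
  have ta1: "take (Suc a) u1 = L1 @ [c] @ L2" "drop (Suc a) u1 = Y1 @ Y2" unfolding e1 an by simp_all
  have fx: "filter (\<lambda>x. x \<noteq> c) (L1 @ [c] @ L2) = L1 @ L2" using nc by (simp add: filter_neq)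
  have "filter (\<lambda>x. ?r c < ?r x) Y1 = []" "filter (\<lambda>x. ?r x < ?r c) Y2 = []"
    using g2 l2 by (intro filter_False; force)+
  moreover have "filter (\<lambda>x. ?r c < ?r x) Y2 = Y2" "filter (\<lambda>x. ?r x < ?r c) Y1 = Y1"
    using g2 l2 by (intro filter_True; force)+
  ultimately have fy2: "filter (\<lambda>x. ?r x < ?r c) (Y1 @ Y2) = Y1" "filter (\<lambda>x. ?r c < ?r x) (Y1 @ Y2) = Y2"
    by simp_all
  have "gL k a u1 = (L1 @ L2) @ Y1 @ [c] @ Y2" unfolding gL_def Let_def cm1 su ta1 fx fy2 by simp
  then show "gL k a u1 = u0" using e0 by simp
  have M: "\<forall>x\<in>set (L2 @ Y1). x \<le> k \<and> \<not> cadj k x c"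
  proof
    fix x assume x: "x \<in> set (L2 @ Y1)"
    then have "x \<in> ?S" "?r x < ?r c" using l1 l2 unfolding u0_def by auto
    then show "x \<le> k \<and> \<not> cadj k x c" using gap_nonadj[OF g _ ] um unfolding umin_def by blast
  qed
  have ck: "c \<le> k" using cS sk by auto
  have sL: "set L1 \<subseteq> {0..k}" "set Y2 \<subseteq> {0..k}" using sk unfolding u0_def by auto
  have "conv k (L1 @ ((L2 @ Y1) @ [c]) @ Y2) (L1 @ (c # (L2 @ Y1)) @ Y2)"
    by (rule conv_app[OF conv_commute[OF M ck] sL])
  then show "conv k u0 u1" unfolding u0_def u1_def by simp
qed



lemma R_props: assumes uR: "u \<in> Rset k r (int n)" and rk: "r \<le> k" and a: "a = r - 1 - n"
  shows "fR k a u \<in> Unwcleft k r (int n - 1) \<and> gL k a (fR k a u) = u \<and> conv k u (fR k a u)"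
proof -
  have uU: "isU k u" "length u = r" "asc k u = n" "\<not> wconn k u"
    using uR unfolding Rset_def Uset_def by auto
  have nleft: "\<not> (\<exists>c. umin k u c \<and> count_list u c = 1 \<and> (\<exists>p. Ushape k u p \<and> c \<in> set (take (Suc p) u)))"
    using uR uU unfolding Rset_def Unwcleft_def Uset_def by auto
  obtain p where U: "Ushape k u p" using uU unfolding isU_def by blast
  have sk: "set u \<subseteq> {0..k}" using uU unfolding isU_def properword_def by blast
  let ?S = "set u"
  let ?r = "rk k ?S"
  have g: "gd k ?S" using gd_word sk uU rk by simp
  have nk: "\<not> kconn k u" using uU unfolding wconn_def by blast
  obtain c where um: "umin k u c" using umin_exists[OF g nk] by blast
  define xs where "xs = take (Suc p) u"
  define ys where "ys = drop (Suc p) u"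
  have D: "decr k ?S xs" "incr k ?S ys" "xs \<noteq> []" "ys \<noteq> []" "last xs = hd ys" "length xs = Suc p"
    using destU[OF U] unfolding xs_def ys_def by auto
  have uxy: "u = xs @ ys" unfolding xs_def ys_def by simp
  have asU: "asc k u = length u - p - 2" using asc_U[OF U] .
  have lu: "Suc p < length u" using U unfolding Ushape_def by simp
  have aSp: "a = Suc p" using asU uU a lu by simp
  have dist: "distinct xs" "distinct ys" using D decr_distinct incr_distinct by auto
  have cS: "c \<in> ?S" using um unfolding umin_def gapletter_def by blast
  have cxs: "c \<notin> set xs"
  proof
    assume cx: "c \<in> set xs"
    show False
    proof (cases "c \<in> set ys")
      case True
      then have "count_list u c = 2" unfolding uxy using cx dist by (simp add: count_distinct)
      then show False using uU(4) um unfolding wconn_def by blast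
    next
      case False
      then have "count_list u c = 1" unfolding uxy using cx dist by (simp add: count_distinct)
      then show False using nleft um U cx unfolding xs_def by blast
    qed
  qed
  have cys: "c \<in> set ys" using cS cxs uxy by auto
  have H: "\<forall>x\<in>?S. x \<noteq> c \<longrightarrow> ?r x \<noteq> ?r c"
    using rk_inj[OF g] sk cS by (metis atLeastAtMost_iff subsetD)
  have Hx: "\<forall>x\<in>set xs. x \<noteq> c \<longrightarrow> ?r x \<noteq> ?r c" using H uxy by auto
  have Hy: "\<forall>x\<in>set ys. x \<noteq> c \<longrightarrow> ?r x \<noteq> ?r c" using H uxy by auto
  define L1 where "L1 = filter (\<lambda>x. ?r c < ?r x) xs"
  define L2 where "L2 = filter (\<lambda>x. ?r x < ?r c) xs"
  define Y1 where "Y1 = filter (\<lambda>x. ?r x < ?r c) ys"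
  define Y2 where "Y2 = filter (\<lambda>x. ?r c < ?r x) ys"
  have xs_eq: "xs = L1 @ L2"
    using decr_split[OF D(1) Hx] filter_eq_c[OF dist(1), of c] cxs unfolding L1_def L2_def by simp
  have ys_eq: "ys = Y1 @ [c] @ Y2"
    using incr_split[OF D(2) Hy] filter_eq_c[OF dist(2), of c] cys unfolding Y1_def Y2_def by simp
  define m where "m = last xs"
  have mx: "m \<in> set xs" unfolding m_def using D(3) by simp
  have mc: "m \<noteq> c" using mx cxs by auto
  have ys_m: "ys = m # tl ys" unfolding m_def using D(4,5) by simp
  have "c \<in> set (tl ys)" using cys mc ys_m by (metis set_ConsD)
  then have mlt: "?r m < ?r c" using D(2) ys_m unfolding incr_def by (metis sorted_wrt.simps(2))
  have L2ne: "L2 \<noteq> [] \<and> last L2 = m" unfolding L2_def m_def using last_filter[OF D(3)] mlt m_def by simp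
  have Y1ne: "Y1 \<noteq> [] \<and> hd Y1 = m" unfolding Y1_def using hd_filter[OF D(4)] mlt D(5) m_def by simp
  have iY: "incr k ?S (Y1 @ Y2)" unfolding Y1_def Y2_def incr_def
    using D(2) unfolding incr_def by (auto simp: sorted_wrt_append sorted_wrt_filter)
  have ustr: "u = L1 @ L2 @ Y1 @ [c] @ Y2" using uxy xs_eq ys_eq by simp
  have lens: "a = length L1 + length L2" "n = length Y1 + length Y2"
  proof -
    show "a = length L1 + length L2" using aSp D(6) xs_eq by simp
    have "length u = Suc p + length ys" using uxy D(6) by simp
    then show "n = length Y1 + length Y2" using asU uU(3) ys_eq by simp
  qed
  have Q: "u \<in> Rset k r (int n)" "fR k a u \<in> Unwcleft k r (int n - 1)" "fR k a u = L1 @ [c] @ L2 @ Y1 @ Y2"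
    "gL k a (L1 @ [c] @ L2 @ Y1 @ Y2) = u" "conv k u (L1 @ [c] @ L2 @ Y1 @ Y2)"
  proof -
    let ?u0 = "L1 @ L2 @ Y1 @ [c] @ Y2"
    have f1: "set ?u0 \<subseteq> {0..k}" using sk ustr by simp
    have f2: "length ?u0 = r" using uU ustr by simp
    have f4: "umin k ?u0 c" using um ustr by simp
    have f5: "\<not> wconn k ?u0" using uU ustr by simp
    have f6: "decr k (set ?u0) (L1 @ L2)" using D(1) xs_eq ustr by simp
    have f7: "incr k (set ?u0) (Y1 @ Y2)" using iY ustr by simp
    have f8: "\<forall>x\<in>set L1. rk k (set ?u0) c < rk k (set ?u0) x"
      using ustr unfolding L1_def by simp
    have f9: "\<forall>x\<in>set Y2. rk k (set ?u0) c < rk k (set ?u0) x"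
      using ustr unfolding Y2_def by simp
    have f10: "\<forall>x\<in>set L2. rk k (set ?u0) x < rk k (set ?u0) c"
      using ustr unfolding L2_def by simp
    have f11: "\<forall>x\<in>set Y1. rk k (set ?u0) x < rk k (set ?u0) c"
      using ustr unfolding Y1_def by simp
    have f12: "L2 \<noteq> []" "Y1 \<noteq> []" "last L2 = hd Y1" using L2ne Y1ne by auto
    note q = quad[OF f1 f2 rk f4 f5 f6 f7 f8 f9 f10 f11 f12 lens]
    then show "u \<in> Rset k r (int n)" "fR k a u \<in> Unwcleft k r (int n - 1)" "fR k a u = L1 @ [c] @ L2 @ Y1 @ Y2"
      "gL k a (L1 @ [c] @ L2 @ Y1 @ Y2) = u" "conv k u (L1 @ [c] @ L2 @ Y1 @ Y2)"
      using q ustr by auto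
  qed
  then show ?thesis by simp
qed

lemma L_props: assumes vL: "v \<in> Unwcleft k r (int n - 1)" and rk: "r \<le> k" and a: "a = r - 1 - n"
  shows "gL k a v \<in> Rset k r (int n) \<and> fR k a (gL k a v) = v"
proof -
  have vU: "isU k v" "length v = r" "int (asc k v) = int n - 1" "\<not> wconn k v"
    using vL unfolding Unwcleft_def Uset_def by auto
  obtain c p where cp: "umin k v c" "count_list v c = 1" "Ushape k v p" "c \<in> set (take (Suc p) v)"
    using vL unfolding Unwcleft_def by blast
  note U = cp(3)
  have sk: "set v \<subseteq> {0..k}" using vU unfolding isU_def properword_def by blast
  let ?S = "set v"
  let ?r = "rk k ?S"
  have g: "gd k ?S" using gd_word sk vU rk by simp
  define xs where "xs = take (Suc p) v"
  define ys where "ys = drop (Suc p) v"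
  have D: "decr k ?S xs" "incr k ?S ys" "xs \<noteq> []" "ys \<noteq> []" "last xs = hd ys" "length xs = Suc p"
    using destU[OF U] unfolding xs_def ys_def by auto
  have vxy: "v = xs @ ys" unfolding xs_def ys_def by simp
  have asU: "asc k v = length v - p - 2" using asc_U[OF U] .
  have lv: "Suc p < length v" using U unfolding Ushape_def by simp
  have n1: "n \<ge> 1" using vU(3) by simp
  have ap: "a = p" using asU vU a lv n1 by simp
  have dist: "distinct xs" "distinct ys" using D decr_distinct incr_distinct by auto
  have cxs: "c \<in> set xs" using cp(4) unfolding xs_def .
  have cys: "c \<notin> set ys"
  proof
    assume "c \<in> set ys"
    then have "count_list v c = 2" unfolding vxy using cxs dist by (simp add: count_distinct)
    then show False using cp(2) by simp
  qed
  have cS: "c \<in> ?S" using cxs vxy by simp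
  have H: "\<forall>x\<in>?S. x \<noteq> c \<longrightarrow> ?r x \<noteq> ?r c"
    using rk_inj[OF g] sk cS by (metis atLeastAtMost_iff subsetD)
  have Hx: "\<forall>x\<in>set xs. x \<noteq> c \<longrightarrow> ?r x \<noteq> ?r c" using H vxy by auto
  have Hy: "\<forall>x\<in>set ys. x \<noteq> c \<longrightarrow> ?r x \<noteq> ?r c" using H vxy by auto
  define L1 where "L1 = filter (\<lambda>x. ?r c < ?r x) xs"
  define L2 where "L2 = filter (\<lambda>x. ?r x < ?r c) xs"
  define Y1 where "Y1 = filter (\<lambda>x. ?r x < ?r c) ys"
  define Y2 where "Y2 = filter (\<lambda>x. ?r c < ?r x) ys"
  have xs_eq: "xs = L1 @ [c] @ L2"
    using decr_split[OF D(1) Hx] filter_eq_c[OF dist(1), of c] cxs unfolding L1_def L2_def by simp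
  have ys_eq: "ys = Y1 @ Y2"
    using incr_split[OF D(2) Hy] filter_eq_c[OF dist(2), of c] cys unfolding Y1_def Y2_def by simp
  define m where "m = hd ys"
  have my: "m \<in> set ys" unfolding m_def using D(4) by simp
  have mc: "m \<noteq> c" using my cys by auto
  have xs_m: "xs = butlast xs @ [m]" unfolding m_def using D(3,5) by (metis append_butlast_last_id)
  have "c \<in> set (butlast xs)" using cxs mc xs_m by (metis rotate1.simps(2) set_ConsD set_rotate1)
  then have mlt: "?r m < ?r c" using D(1) xs_m unfolding decr_def by (metis sorted_wrt_append list.set_intros(1))
  have L2ne: "L2 \<noteq> [] \<and> last L2 = m" unfolding L2_def m_def using last_filter[OF D(3)] mlt m_def D(5) by simp
  have Y1ne: "Y1 \<noteq> [] \<and> hd Y1 = m" unfolding Y1_def using hd_filter[OF D(4)] mlt m_def by simp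
  have dL: "decr k ?S (L1 @ L2)" unfolding L1_def L2_def decr_def
    using D(1) unfolding decr_def by (auto simp: sorted_wrt_append sorted_wrt_filter)
  have vstr: "v = L1 @ [c] @ L2 @ Y1 @ Y2" using vxy xs_eq ys_eq by simp
  let ?u0 = "L1 @ L2 @ Y1 @ [c] @ Y2"
  have su: "set ?u0 = ?S" using vstr by auto
  have cu: "\<And>x. count_list v x = count_list ?u0 x" using vstr by simp
  have lens: "a = length L1 + length L2" "n = length Y1 + length Y2"
  proof -
    show "a = length L1 + length L2" using ap D(6) xs_eq by simp
    have lv: "length v = Suc p + length ys" using vxy D(6) by simp
    have "length ys \<noteq> 0" using D(4) by simp
    moreover have "length ys = length Y1 + length Y2" using ys_eq by simp
    ultimately have "length Y1 + length Y2 \<ge> 1" by linarith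
    then show "n = length Y1 + length Y2" using asU vU(3) \<open>length ys = length Y1 + length Y2\<close> n1 lv
      by (simp add: of_nat_diff)
  qed
  have f1: "set ?u0 \<subseteq> {0..k}" using sk su by simp
  have f2: "length ?u0 = r" using vU vstr by simp
  have f4: "umin k ?u0 c" using cp(1) umin_set[OF su] by simp
  have f5: "\<not> wconn k ?u0" using vU(4) wconn_perm[OF su[symmetric] cu] by simp
  have f6: "decr k (set ?u0) (L1 @ L2)" using dL su by simp
  have f7: "incr k (set ?u0) (Y1 @ Y2)" using D(2) ys_eq su by simp
  have f8: "\<forall>x\<in>set L1. rk k (set ?u0) c < rk k (set ?u0) x"
    using su unfolding L1_def by simp
  have f9: "\<forall>x\<in>set Y2. rk k (set ?u0) c < rk k (set ?u0) x"
    using su unfolding Y2_def by simp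
  have f10: "\<forall>x\<in>set L2. rk k (set ?u0) x < rk k (set ?u0) c"
    using su unfolding L2_def by simp
  have f11: "\<forall>x\<in>set Y1. rk k (set ?u0) x < rk k (set ?u0) c"
    using su unfolding Y1_def by simp
  have f12: "L2 \<noteq> []" "Y1 \<noteq> []" "last L2 = hd Y1" using L2ne Y1ne by auto
  note q = quad[OF f1 f2 rk f4 f5 f6 f7 f8 f9 f10 f11 f12 lens]
  show ?thesis using q vstr by simp
qed

lemma Ind_sum: "finite X \<Longrightarrow> Ind X = (\<lambda>w. \<Sum>u\<in>X. wd u w)"
  unfolding Ind_def wd_def by (auto simp: sum.delta')

lemma Uset_finite: "finite (Uset k r t)"
proof -
  have "Uset k r t \<subseteq> {xs. set xs \<subseteq> {0..k} \<and> length xs = r}"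
    unfolding Uset_def isU_def properword_def by auto
  then show ?thesis by (rule finite_subset) (rule finite_lists_length_eq, simp)
qed

lemma Aeq_RL: assumes rk: "r \<le> k" shows "Aeq k (Ind (Rset k r t)) (Ind (Unwcleft k r (t - 1)))"
proof (cases "t < 0")
  case True
  have "Rset k r t = {}" "Unwcleft k r (t - 1) = {}"
    using True unfolding Rset_def Unwcleft_def Uset_def by auto
  then show ?thesis by (simp add: Aeq_refl)
next
  case False
  then obtain n where tn: "t = int n" by (metis nonneg_int_cases not_less)
  define a where "a = r - 1 - n"
  let ?R = "Rset k r (int n)"
  let ?L = "Unwcleft k r (int n - 1)"
  have fR: "finite ?R" using Uset_finite unfolding Rset_def by (rule finite_subset[rotated]) auto
  have fL: "finite ?L" using Uset_finite unfolding Unwcleft_def by (rule finite_subset[rotated]) auto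
  have bij: "bij_betw (fR k a) ?R ?L"
  proof (rule bij_betw_byWitness[where f' = "gL k a"])
    show "\<forall>u\<in>?R. gL k a (fR k a u) = u" using R_props[OF _ rk a_def] by blast
    show "\<forall>v\<in>?L. fR k a (gL k a v) = v" using L_props[OF _ rk a_def] by blast
    show "fR k a ` ?R \<subseteq> ?L" using R_props[OF _ rk a_def] by blast
    show "gL k a ` ?L \<subseteq> ?R" using L_props[OF _ rk a_def] by blast
  qed
  have "Aeq k (\<lambda>w. \<Sum>u\<in>?R. wd u w) (\<lambda>w. \<Sum>u\<in>?R. wd (fR k a u) w)"
    by (rule Aeq_sum[OF fR]) (use R_props[OF _ rk a_def] conv_Aeq in blast)
  moreover have "(\<lambda>w. \<Sum>u\<in>?R. wd (fR k a u) w) = (\<lambda>w. \<Sum>v\<in>?L. wd v w)"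
    by (intro ext) (rule sum.reindex_bij_betw[OF bij])
  ultimately show ?thesis unfolding tn Ind_sum[OF fR] Ind_sum[OF fL] by simp
qed



lemma tele1: fixes f g :: "int \<Rightarrow> int" assumes "f (-1) = 0" "g (-1) = 0"
  shows "(\<Sum>j\<le>i. (-1) ^ j * (f (int i - int j) + f (int i - int j - 1) + g (int i - int j - 1)))
       = f (int i) + (\<Sum>j<i. (-1) ^ j * g (int i - int j - 1))"
proof -
  define G where "G j = (-1) ^ j * f (int i - int j)" for j
  have 1: "(-1) ^ j * (f (int i - int j) + f (int i - int j - 1)) = G j - G (Suc j)" for j
    unfolding G_def by (simp add: algebra_simps)
  have "(\<Sum>j\<le>i. (-1) ^ j * (f (int i - int j) + f (int i - int j - 1))) = G 0 - G (Suc i)"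
    unfolding 1 by (rule sum_telescope)
  also have "\<dots> = f (int i)" unfolding G_def using assms by simp
  finally have A: "(\<Sum>j\<le>i. (-1) ^ j * (f (int i - int j) + f (int i - int j - 1))) = f (int i)" .
  have B: "(\<Sum>j\<le>i. (-1) ^ j * g (int i - int j - 1)) = (\<Sum>j<i. (-1) ^ j * g (int i - int j - 1))"
    using assms by (simp add: lessThan_Suc_atMost[symmetric])
  have "(\<Sum>j\<le>i. (-1) ^ j * (f (int i - int j) + f (int i - int j - 1) + g (int i - int j - 1)))
     = (\<Sum>j\<le>i. (-1) ^ j * (f (int i - int j) + f (int i - int j - 1))) + (\<Sum>j\<le>i. (-1) ^ j * g (int i - int j - 1))"
    by (simp add: algebra_simps sum.distrib)
  then show ?thesis using A B by simp
qed

lemma tele2: fixes h :: "int \<Rightarrow> int" assumes "h (-1) = 0"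
  shows "(\<Sum>j<i. (-1) ^ j * (h (int i - int j - 1) + h (int i - int j - 1 - 1))) = h (int i - 1)"
proof -
  define H where "H j = (-1) ^ j * h (int i - int j - 1)" for j
  have 1: "(-1) ^ j * (h (int i - int j - 1) + h (int i - int j - 1 - 1)) = H j - H (Suc j)" for j
    unfolding H_def by (simp add: algebra_simps)
  have "(\<Sum>j<i. (-1) ^ j * (h (int i - int j - 1) + h (int i - int j - 1 - 1))) = H 0 - H i"
    unfolding 1 by (rule sum_lessThan_telescope')
  also have "\<dots> = h (int i - 1)" unfolding H_def using assms by simp
  finally show ?thesis .
qed

lemma U_split: "Ind (Uset k r t) w = Ind (Uwc k r t) w + Ind (Unwcleft k r t) w + Ind (Rset k r t) w"
  unfolding Ind_def Uwc_def Rset_def Unwcleft_def by auto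

theorem lemma7p5:
  fixes k r i :: nat
  assumes "i \<le> r" and "r \<le> k"
  shows "Aeq k (shook k r i)
           (\<lambda>w. Ind (Vset k r (int i)) w
               + (\<Sum>j<i. (-1) ^ j * Ind (Uwc k r (int i - int j - 1)) w)
               + Ind (Unwcleft k r (int i - 1)) w)"
proof -
  let ?V = "\<lambda>w t. Ind (Vset k r t) w"
  let ?U = "\<lambda>w t. Ind (Uset k r t) w"
  have S1: "Aeq k (shook k r i)
     (\<lambda>w. \<Sum>j\<le>i. (-1) ^ j * (?V w (int i - int j) + ?V w (int i - int j - 1) + ?U w (int i - int j - 1)))"
    unfolding shook_def
  proof (rule Aeq_sum)
    show "finite {..i}" by simp
    fix j assume j: "j \<in> {..i}"
    have ab: "(r - i + j) + (i - j) = r" using j assms by auto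
    have "Aeq k (fmul (hh k (r - i + j)) (ee k (i - j))) (\<lambda>w. if Pa k (r - i + j) ((r - i + j) + (i - j)) w then 1 else 0)"
      using prod_Aeq[of "r - i + j" "i - j" k] Phi_sum[of "r - i + j" "i - j" k] ab assms by simp
    moreover have "(\<lambda>w. if Pa k (r - i + j) ((r - i + j) + (i - j)) w then 1 else 0)
       = (\<lambda>w. ?V w (int i - int j) + ?V w (int i - int j - 1) + ?U w (int i - int j - 1))"
      using D_eq[OF ab assms(2)] j ab by (simp add: of_nat_diff)
    ultimately have "Aeq k (fmul (hh k (r - i + j)) (ee k (i - j)))
        (\<lambda>w. ?V w (int i - int j) + ?V w (int i - int j - 1) + ?U w (int i - int j - 1))" by simp
    from Aeq_smult[OF this, of "(-1) ^ j"]
    show "Aeq k (\<lambda>w. (-1) ^ j * fmul (hh k (r - i + j)) (ee k (i - j)) w)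
       (\<lambda>w. (-1) ^ j * (?V w (int i - int j) + ?V w (int i - int j - 1) + ?U w (int i - int j - 1)))" .
  qed
  have V0: "?V w (-1) = 0" "?U w (-1) = 0" for w unfolding Ind_def Vset_def Uset_def by auto
  have S2: "(\<lambda>w. \<Sum>j\<le>i. (-1) ^ j * (?V w (int i - int j) + ?V w (int i - int j - 1) + ?U w (int i - int j - 1)))
     = (\<lambda>w. ?V w (int i) + (\<Sum>j<i. (-1) ^ j * ?U w (int i - int j - 1)))"
    by (intro ext tele1) (simp_all add: V0)
  let ?W = "\<lambda>w t. Ind (Uwc k r t) w"
  let ?L = "\<lambda>w t. Ind (Unwcleft k r t) w"
  have S3: "Aeq k (\<lambda>w. ?V w (int i) + (\<Sum>j<i. (-1) ^ j * ?U w (int i - int j - 1)))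
     (\<lambda>w. ?V w (int i) + (\<Sum>j<i. (-1) ^ j * (?W w (int i - int j - 1) + ?L w (int i - int j - 1) + ?L w (int i - int j - 1 - 1))))"
  proof (rule Aeq_add[OF Aeq_refl])
    show "Aeq k (\<lambda>w. \<Sum>j<i. (-1) ^ j * ?U w (int i - int j - 1))
       (\<lambda>w. \<Sum>j<i. (-1) ^ j * (?W w (int i - int j - 1) + ?L w (int i - int j - 1) + ?L w (int i - int j - 1 - 1)))"
    proof (rule Aeq_sum)
      show "finite {..<i}" by simp
      fix j assume j: "j \<in> {..<i}"
      let ?t = "int i - int j - 1"
      have "Aeq k (\<lambda>w. ?W w ?t + ?L w ?t + Ind (Rset k r ?t) w) (\<lambda>w. ?W w ?t + ?L w ?t + ?L w (?t - 1))"
        by (rule Aeq_add[OF Aeq_refl Aeq_RL[OF assms(2)]])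
      then have "Aeq k (\<lambda>w. ?U w ?t) (\<lambda>w. ?W w ?t + ?L w ?t + ?L w (?t - 1))"
        unfolding U_split by simp
      from Aeq_smult[OF this, of "(-1) ^ j"]
      show "Aeq k (\<lambda>w. (-1) ^ j * ?U w ?t) (\<lambda>w. (-1) ^ j * (?W w ?t + ?L w ?t + ?L w (?t - 1)))" .
    qed
  qed
  have L0: "?L w (-1) = 0" for w unfolding Ind_def Unwcleft_def Uset_def by auto
  have S4: "(\<lambda>w. ?V w (int i) + (\<Sum>j<i. (-1) ^ j * (?W w (int i - int j - 1) + ?L w (int i - int j - 1) + ?L w (int i - int j - 1 - 1))))
     = (\<lambda>w. ?V w (int i) + (\<Sum>j<i. (-1) ^ j * ?W w (int i - int j - 1)) + ?L w (int i - 1))"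
  proof
    fix w
    have "(\<Sum>j<i. (-1) ^ j * (?W w (int i - int j - 1) + ?L w (int i - int j - 1) + ?L w (int i - int j - 1 - 1)))
        = (\<Sum>j<i. (-1) ^ j * ?W w (int i - int j - 1)) + (\<Sum>j<i. (-1) ^ j * (?L w (int i - int j - 1) + ?L w (int i - int j - 1 - 1)))"
      by (simp add: algebra_simps sum.distrib)
    also have "\<dots> = (\<Sum>j<i. (-1) ^ j * ?W w (int i - int j - 1)) + ?L w (int i - 1)"
      using tele2[of "\<lambda>t. ?L w t" i] L0 by simp
    finally show "?V w (int i) + (\<Sum>j<i. (-1) ^ j * (?W w (int i - int j - 1) + ?L w (int i - int j - 1) + ?L w (int i - int j - 1 - 1)))
       = ?V w (int i) + (\<Sum>j<i. (-1) ^ j * ?W w (int i - int j - 1)) + ?L w (int i - 1)" by simp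
  qed
  have "Aeq k (shook k r i) (\<lambda>w. ?V w (int i) + (\<Sum>j<i. (-1) ^ j * ?U w (int i - int j - 1)))"
    using S1 S2 by simp
  from Aeq_trans[OF this S3] show ?thesis using S4 by simp
qed

end
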